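(* Let $A$ be a generic real $6\times6$ skew-Hamiltonian matrix, let $p,q,r$ be smooth functions on $\mathbb R^6$, and define for $\varepsilon\in\mathbb R$ $$\Pi(x)=(1-\varepsilon^2p(x))J-\varepsilon^2q(x)A^{\rm T}J-\varepsilon^2r(x)(A^{\rm T})^2J.$$ Then $\Pi$ is a Poisson tensor for all $\varepsilon$ if and only if $\nabla q=C_1\nabla r$ and $\nabla p=C_2\nabla r$, where $C_1=A-aI$, $C_2=A^2-aA+bI$, $a=\tfrac12\operatorname{tr}A$, $b=\tfrac18(\operatorname{tr}A)^2-\tfrac14\operatorname{tr}(A^2)$.
   Context: $J=\begin{pmatrix}0&I_3\\-I_3&0\end{pmatrix}$; a real $6\times6$ matrix $A$ is skew-Hamiltonian if $A^{\rm T}J=JA$. Genericity: the characteristic polynomial of $A$ (a square of a cubic) has three pairwise distinct roots, each a double eigenvalue. A (skew-symmetric) matrix-valued function $\Pi$ is a Poisson tensor if the bracket $\{F,G\}=(\nabla F)^{\rm T}\Pi\nabla G$ satisfies the Jacobi identity, i.e. $\{x_i,\{x_j,x_k\}\}+\{x_j,\{x_k,x_i\}\}+\{x_k,\{x_i,x_j\}\}=0$ for all $i,j,k$. *)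

theory Defs
  imports "HOL-Analysis.Analysis"
begin

text \<open>Vectors in R^6 are \<open>real^6\<close>; 6x6 real matrices are \<open>real^6^6\<close>.
  Index type 6 is a ring (integers mod 6) with elements 0,...,5.\<close>

definition Jmat :: "real^6^6" where
  "Jmat = (\<chi> i j. if j = i + 3 then (if i \<in> {0,1,2} then 1 else -1) else 0)"

definition skew_hamiltonian :: "real^6^6 \<Rightarrow> bool" where
  "skew_hamiltonian A \<longleftrightarrow> transpose A ** Jmat = Jmat ** A"

definition charpoly_eval :: "real^6^6 \<Rightarrow> complex \<Rightarrow> complex" where
  "charpoly_eval A t = det ((\<chi> i j. (if i = j then t else 0) - complex_of_real (A $ i $ j)) :: complex^6^6)"

definition generic_sh :: "real^6^6 \<Rightarrow> bool" where
  "generic_sh A \<longleftrightarrow> (\<exists>l1 l2 l3. l1 \<noteq> l2 \<and> l1 \<noteq> l3 \<and> l2 \<noteq> l3 \<and>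
      (\<forall>t. charpoly_eval A t = ((t - l1) * (t - l2) * (t - l3))^2))"

definition pdiff :: "(real^'n \<Rightarrow> real) \<Rightarrow> 'n \<Rightarrow> real^'n \<Rightarrow> real" where
  "pdiff f l = (\<lambda>x. frechet_derivative f (at x) (axis l 1))"

definition grad :: "(real^'n \<Rightarrow> real) \<Rightarrow> real^'n \<Rightarrow> real^'n" where
  "grad f x = (\<chi> l. pdiff f l x)"

definition smooth :: "(real^'n \<Rightarrow> real) \<Rightarrow> bool" where
  "smooth f \<longleftrightarrow> (\<forall>ls :: 'n list. foldr (\<lambda>l g. pdiff g l) ls f differentiable_on UNIV)"

text \<open>Poisson tensor: skew-symmetric and the bracket
  {F,G} = (grad F)^T Pi (grad G) satisfies Jacobi on coordinate functions;
  {x_i, G} = sum_l Pi_il d_l G and {x_j,x_k} = Pi_jk.\<close>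
definition coord_bracket :: "(real^'n \<Rightarrow> real^'n^'n) \<Rightarrow> 'n \<Rightarrow> 'n \<Rightarrow> 'n \<Rightarrow> real^'n \<Rightarrow> real" where
  "coord_bracket P i j k x = (\<Sum>l\<in>UNIV. P x $ i $ l * pdiff (\<lambda>y. P y $ j $ k) l x)"

definition poisson_tensor :: "(real^'n \<Rightarrow> real^'n^'n) \<Rightarrow> bool" where
  "poisson_tensor P \<longleftrightarrow> (\<forall>x. transpose (P x) = - P x) \<and>
     (\<forall>x i j k. coord_bracket P i j k x + coord_bracket P j k i x + coord_bracket P k i j x = 0)"

definition Pi_eps :: "real^6^6 \<Rightarrow> (real^6 \<Rightarrow> real) \<Rightarrow> (real^6 \<Rightarrow> real) \<Rightarrow> (real^6 \<Rightarrow> real)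
    \<Rightarrow> real \<Rightarrow> real^6 \<Rightarrow> real^6^6" where
  "Pi_eps A p q r \<epsilon> x = (1 - \<epsilon>^2 * p x) *\<^sub>R Jmat - (\<epsilon>^2 * q x) *\<^sub>R (transpose A ** Jmat)
      - (\<epsilon>^2 * r x) *\<^sub>R (transpose A ** transpose A ** Jmat)"

end

theory Submission
  imports Defs
begin

lemma exhaust_6:
  fixes x :: 6
  shows "x = 0 \<or> x = 1 \<or> x = 2 \<or> x = 3 \<or> x = 4 \<or> x = 5"
proof (induct x)
  case (of_int z)
  then have "z = 0 \<or> z = 1 \<or> z = 2 \<or> z = 3 \<or> z = 4 \<or> z = 5" by fastforce
  then show ?case by auto
qed
lemma UNIV_6: "(UNIV::6 set) = {0,1,2,3,4,5}"
  using exhaust_6 by auto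
lemma sum_6: "sum f (UNIV::6 set) = f 0 + f 1 + f 2 + f 3 + f 4 + f 5"
  unfolding UNIV_6 by (simp add: ac_simps)

lemma J_entries: "Jmat $ i $ j = (if j = i + 3 then (if i \<in> {0,1,2} then 1 else -1) else 0)"
  by (simp add: Jmat_def)

lemma sh_eq: assumes "skew_hamiltonian A"
  shows "(\<Sum>k\<in>UNIV. A $ k $ i * Jmat $ k $ j) = (\<Sum>k\<in>UNIV. Jmat $ i $ k * A $ k $ j)"
  using assms unfolding skew_hamiltonian_def vec_eq_iff matrix_matrix_mult_def transpose_def by simp

lemma sh0: assumes "skew_hamiltonian A" shows "A $ 3 $ 3 = A $ 0 $ 0"
  using sh_eq[OF assms, of 0 3, unfolded sum_6 J_entries] by (simp; linarith)
lemma sh1: assumes "skew_hamiltonian A" shows "A $ 3 $ 4 = A $ 1 $ 0"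
  using sh_eq[OF assms, of 0 4, unfolded sum_6 J_entries] by (simp; linarith)
lemma sh2: assumes "skew_hamiltonian A" shows "A $ 3 $ 5 = A $ 2 $ 0"
  using sh_eq[OF assms, of 0 5, unfolded sum_6 J_entries] by (simp; linarith)
lemma sh3: assumes "skew_hamiltonian A" shows "A $ 4 $ 3 = A $ 0 $ 1"
  using sh_eq[OF assms, of 1 3, unfolded sum_6 J_entries] by (simp; linarith)
lemma sh4: assumes "skew_hamiltonian A" shows "A $ 4 $ 4 = A $ 1 $ 1"
  using sh_eq[OF assms, of 1 4, unfolded sum_6 J_entries] by (simp; linarith)
lemma sh5: assumes "skew_hamiltonian A" shows "A $ 4 $ 5 = A $ 2 $ 1"
  using sh_eq[OF assms, of 1 5, unfolded sum_6 J_entries] by (simp; linarith)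
lemma sh6: assumes "skew_hamiltonian A" shows "A $ 5 $ 3 = A $ 0 $ 2"
  using sh_eq[OF assms, of 2 3, unfolded sum_6 J_entries] by (simp; linarith)
lemma sh7: assumes "skew_hamiltonian A" shows "A $ 5 $ 4 = A $ 1 $ 2"
  using sh_eq[OF assms, of 2 4, unfolded sum_6 J_entries] by (simp; linarith)
lemma sh8: assumes "skew_hamiltonian A" shows "A $ 5 $ 5 = A $ 2 $ 2"
  using sh_eq[OF assms, of 2 5, unfolded sum_6 J_entries] by (simp; linarith)
lemma sh9: assumes "skew_hamiltonian A" shows "A $ 0 $ 3 = 0"
  using sh_eq[OF assms, of 3 3, unfolded sum_6 J_entries] by (simp; linarith)
lemma sh10: assumes "skew_hamiltonian A" shows "A $ 3 $ 0 = 0"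
  using sh_eq[OF assms, of 0 0, unfolded sum_6 J_entries] by (simp; linarith)
lemma sh11: assumes "skew_hamiltonian A" shows "A $ 1 $ 4 = 0"
  using sh_eq[OF assms, of 4 4, unfolded sum_6 J_entries] by (simp; linarith)
lemma sh12: assumes "skew_hamiltonian A" shows "A $ 4 $ 1 = 0"
  using sh_eq[OF assms, of 1 1, unfolded sum_6 J_entries] by (simp; linarith)
lemma sh13: assumes "skew_hamiltonian A" shows "A $ 1 $ 3 = - A $ 0 $ 4"
  using sh_eq[OF assms, of 3 4, unfolded sum_6 J_entries] by (simp; linarith)
lemma sh14: assumes "skew_hamiltonian A" shows "A $ 4 $ 0 = - A $ 3 $ 1"
  using sh_eq[OF assms, of 0 1, unfolded sum_6 J_entries] by (simp; linarith)
lemma sh15: assumes "skew_hamiltonian A" shows "A $ 2 $ 5 = 0"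
  using sh_eq[OF assms, of 5 5, unfolded sum_6 J_entries] by (simp; linarith)
lemma sh16: assumes "skew_hamiltonian A" shows "A $ 5 $ 2 = 0"
  using sh_eq[OF assms, of 2 2, unfolded sum_6 J_entries] by (simp; linarith)
lemma sh17: assumes "skew_hamiltonian A" shows "A $ 2 $ 3 = - A $ 0 $ 5"
  using sh_eq[OF assms, of 3 5, unfolded sum_6 J_entries] by (simp; linarith)
lemma sh18: assumes "skew_hamiltonian A" shows "A $ 5 $ 0 = - A $ 3 $ 2"
  using sh_eq[OF assms, of 0 2, unfolded sum_6 J_entries] by (simp; linarith)
lemma sh19: assumes "skew_hamiltonian A" shows "A $ 2 $ 4 = - A $ 1 $ 5"
  using sh_eq[OF assms, of 4 5, unfolded sum_6 J_entries] by (simp; linarith)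
lemma sh20: assumes "skew_hamiltonian A" shows "A $ 5 $ 1 = - A $ 4 $ 2"
  using sh_eq[OF assms, of 1 2, unfolded sum_6 J_entries] by (simp; linarith)
lemmas sh_simps = sh0 sh1 sh2 sh3 sh4 sh5 sh6 sh7 sh8 sh9 sh10 sh11 sh12 sh13 sh14 sh15 sh16 sh17 sh18 sh19 sh20

definition tri :: "real^6^6 \<Rightarrow> real^6 \<Rightarrow> real^6 \<Rightarrow> real^6 \<Rightarrow> 6 \<Rightarrow> 6 \<Rightarrow> 6 \<Rightarrow> real" where
  "tri A u v w i j k =
    (Jmat *v u)$i * Jmat$j$k + (Jmat *v v)$i * (Jmat ** A)$j$k + (Jmat *v w)$i * (Jmat ** A ** A)$j$k +
    (Jmat *v u)$j * Jmat$k$i + (Jmat *v v)$j * (Jmat ** A)$k$i + (Jmat *v w)$j * (Jmat ** A ** A)$k$i +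
    (Jmat *v u)$k * Jmat$i$j + (Jmat *v v)$k * (Jmat ** A)$i$j + (Jmat *v w)$k * (Jmat ** A ** A)$i$j"

lemma forall_6: "(\<forall>i::6. P i) \<longleftrightarrow> P 0 \<and> P 1 \<and> P 2 \<and> P 3 \<and> P 4 \<and> P 5"
  by (metis exhaust_6)

lemma L_tr: assumes "skew_hamiltonian A" shows "trace A = 2*(A $ 0 $ 0) + 2*(A $ 1 $ 1) + 2*(A $ 2 $ 2)"
  by (simp add: trace_def sum_6 J_entries sh_simps[OF assms] mat_def matrix_matrix_mult_def matrix_vector_mult_def)

lemma L_trAA: assumes "skew_hamiltonian A" shows "trace (A ** A) = 2*(A $ 0 $ 0)*(A $ 0 $ 0) + 4*(A $ 0 $ 1)*(A $ 1 $ 0) + 4*(A $ 0 $ 2)*(A $ 2 $ 0) - 4*(A $ 0 $ 4)*(A $ 3 $ 1) - 4*(A $ 0 $ 5)*(A $ 3 $ 2) + 2*(A $ 1 $ 1)*(A $ 1 $ 1) + 4*(A $ 1 $ 2)*(A $ 2 $ 1) - 4*(A $ 1 $ 5)*(A $ 4 $ 2) + 2*(A $ 2 $ 2)*(A $ 2 $ 2)"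
  by (simp add: trace_def sum_6 J_entries sh_simps[OF assms] mat_def matrix_matrix_mult_def matrix_vector_mult_def; simp add: algebra_simps power2_eq_square)

lemma B_0_0: assumes "skew_hamiltonian A" shows "(Jmat ** A) $ 0 $ 0 = 0"
  by (simp add: sum_6 J_entries sh_simps[OF assms] mat_def matrix_matrix_mult_def matrix_vector_mult_def)

lemma D_0_0: assumes "skew_hamiltonian A" shows "(Jmat ** A ** A) $ 0 $ 0 = 0"
  by (simp add: sum_6 J_entries sh_simps[OF assms] mat_def matrix_matrix_mult_def matrix_vector_mult_def; simp add: algebra_simps power2_eq_square)

lemma B_0_1: assumes "skew_hamiltonian A" shows "(Jmat ** A) $ 0 $ 1 = (A $ 3 $ 1)"
  by (simp add: sum_6 J_entries sh_simps[OF assms] mat_def matrix_matrix_mult_def matrix_vector_mult_def)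

lemma D_0_1: assumes "skew_hamiltonian A" shows "(Jmat ** A ** A) $ 0 $ 1 = (A $ 0 $ 0)*(A $ 3 $ 1) + (A $ 1 $ 1)*(A $ 3 $ 1) - (A $ 2 $ 0)*(A $ 4 $ 2) + (A $ 2 $ 1)*(A $ 3 $ 2)"
  by (simp add: sum_6 J_entries sh_simps[OF assms] mat_def matrix_matrix_mult_def matrix_vector_mult_def; simp add: algebra_simps power2_eq_square)

lemma B_0_2: assumes "skew_hamiltonian A" shows "(Jmat ** A) $ 0 $ 2 = (A $ 3 $ 2)"
  by (simp add: sum_6 J_entries sh_simps[OF assms] mat_def matrix_matrix_mult_def matrix_vector_mult_def)

lemma D_0_2: assumes "skew_hamiltonian A" shows "(Jmat ** A ** A) $ 0 $ 2 = (A $ 0 $ 0)*(A $ 3 $ 2) + (A $ 1 $ 0)*(A $ 4 $ 2) + (A $ 1 $ 2)*(A $ 3 $ 1) + (A $ 2 $ 2)*(A $ 3 $ 2)"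
  by (simp add: sum_6 J_entries sh_simps[OF assms] mat_def matrix_matrix_mult_def matrix_vector_mult_def; simp add: algebra_simps power2_eq_square)

lemma B_0_3: assumes "skew_hamiltonian A" shows "(Jmat ** A) $ 0 $ 3 = (A $ 0 $ 0)"
  by (simp add: sum_6 J_entries sh_simps[OF assms] mat_def matrix_matrix_mult_def matrix_vector_mult_def)

lemma D_0_3: assumes "skew_hamiltonian A" shows "(Jmat ** A ** A) $ 0 $ 3 = (A $ 0 $ 0)*(A $ 0 $ 0) + (A $ 0 $ 1)*(A $ 1 $ 0) + (A $ 0 $ 2)*(A $ 2 $ 0) - (A $ 0 $ 4)*(A $ 3 $ 1) - (A $ 0 $ 5)*(A $ 3 $ 2)"
  by (simp add: sum_6 J_entries sh_simps[OF assms] mat_def matrix_matrix_mult_def matrix_vector_mult_def; simp add: algebra_simps power2_eq_square)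

lemma B_0_4: assumes "skew_hamiltonian A" shows "(Jmat ** A) $ 0 $ 4 = (A $ 1 $ 0)"
  by (simp add: sum_6 J_entries sh_simps[OF assms] mat_def matrix_matrix_mult_def matrix_vector_mult_def)

lemma D_0_4: assumes "skew_hamiltonian A" shows "(Jmat ** A ** A) $ 0 $ 4 = (A $ 0 $ 0)*(A $ 1 $ 0) + (A $ 1 $ 0)*(A $ 1 $ 1) + (A $ 1 $ 2)*(A $ 2 $ 0) - (A $ 1 $ 5)*(A $ 3 $ 2)"
  by (simp add: sum_6 J_entries sh_simps[OF assms] mat_def matrix_matrix_mult_def matrix_vector_mult_def; simp add: algebra_simps power2_eq_square)

lemma B_0_5: assumes "skew_hamiltonian A" shows "(Jmat ** A) $ 0 $ 5 = (A $ 2 $ 0)"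
  by (simp add: sum_6 J_entries sh_simps[OF assms] mat_def matrix_matrix_mult_def matrix_vector_mult_def)

lemma D_0_5: assumes "skew_hamiltonian A" shows "(Jmat ** A ** A) $ 0 $ 5 = (A $ 0 $ 0)*(A $ 2 $ 0) + (A $ 1 $ 0)*(A $ 2 $ 1) + (A $ 1 $ 5)*(A $ 3 $ 1) + (A $ 2 $ 0)*(A $ 2 $ 2)"
  by (simp add: sum_6 J_entries sh_simps[OF assms] mat_def matrix_matrix_mult_def matrix_vector_mult_def; simp add: algebra_simps power2_eq_square)

lemma B_1_0: assumes "skew_hamiltonian A" shows "(Jmat ** A) $ 1 $ 0 = - (A $ 3 $ 1)"
  by (simp add: sum_6 J_entries sh_simps[OF assms] mat_def matrix_matrix_mult_def matrix_vector_mult_def)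

lemma D_1_0: assumes "skew_hamiltonian A" shows "(Jmat ** A ** A) $ 1 $ 0 = - (A $ 0 $ 0)*(A $ 3 $ 1) - (A $ 1 $ 1)*(A $ 3 $ 1) + (A $ 2 $ 0)*(A $ 4 $ 2) - (A $ 2 $ 1)*(A $ 3 $ 2)"
  by (simp add: sum_6 J_entries sh_simps[OF assms] mat_def matrix_matrix_mult_def matrix_vector_mult_def; simp add: algebra_simps power2_eq_square)

lemma B_1_1: assumes "skew_hamiltonian A" shows "(Jmat ** A) $ 1 $ 1 = 0"
  by (simp add: sum_6 J_entries sh_simps[OF assms] mat_def matrix_matrix_mult_def matrix_vector_mult_def)

lemma D_1_1: assumes "skew_hamiltonian A" shows "(Jmat ** A ** A) $ 1 $ 1 = 0"
  by (simp add: sum_6 J_entries sh_simps[OF assms] mat_def matrix_matrix_mult_def matrix_vector_mult_def; simp add: algebra_simps power2_eq_square)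

lemma B_1_2: assumes "skew_hamiltonian A" shows "(Jmat ** A) $ 1 $ 2 = (A $ 4 $ 2)"
  by (simp add: sum_6 J_entries sh_simps[OF assms] mat_def matrix_matrix_mult_def matrix_vector_mult_def)

lemma D_1_2: assumes "skew_hamiltonian A" shows "(Jmat ** A ** A) $ 1 $ 2 = (A $ 0 $ 1)*(A $ 3 $ 2) - (A $ 0 $ 2)*(A $ 3 $ 1) + (A $ 1 $ 1)*(A $ 4 $ 2) + (A $ 2 $ 2)*(A $ 4 $ 2)"
  by (simp add: sum_6 J_entries sh_simps[OF assms] mat_def matrix_matrix_mult_def matrix_vector_mult_def; simp add: algebra_simps power2_eq_square)

lemma B_1_3: assumes "skew_hamiltonian A" shows "(Jmat ** A) $ 1 $ 3 = (A $ 0 $ 1)"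
  by (simp add: sum_6 J_entries sh_simps[OF assms] mat_def matrix_matrix_mult_def matrix_vector_mult_def)

lemma D_1_3: assumes "skew_hamiltonian A" shows "(Jmat ** A ** A) $ 1 $ 3 = (A $ 0 $ 0)*(A $ 0 $ 1) + (A $ 0 $ 1)*(A $ 1 $ 1) + (A $ 0 $ 2)*(A $ 2 $ 1) - (A $ 0 $ 5)*(A $ 4 $ 2)"
  by (simp add: sum_6 J_entries sh_simps[OF assms] mat_def matrix_matrix_mult_def matrix_vector_mult_def; simp add: algebra_simps power2_eq_square)

lemma B_1_4: assumes "skew_hamiltonian A" shows "(Jmat ** A) $ 1 $ 4 = (A $ 1 $ 1)"
  by (simp add: sum_6 J_entries sh_simps[OF assms] mat_def matrix_matrix_mult_def matrix_vector_mult_def)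

lemma D_1_4: assumes "skew_hamiltonian A" shows "(Jmat ** A ** A) $ 1 $ 4 = (A $ 0 $ 1)*(A $ 1 $ 0) - (A $ 0 $ 4)*(A $ 3 $ 1) + (A $ 1 $ 1)*(A $ 1 $ 1) + (A $ 1 $ 2)*(A $ 2 $ 1) - (A $ 1 $ 5)*(A $ 4 $ 2)"
  by (simp add: sum_6 J_entries sh_simps[OF assms] mat_def matrix_matrix_mult_def matrix_vector_mult_def; simp add: algebra_simps power2_eq_square)

lemma B_1_5: assumes "skew_hamiltonian A" shows "(Jmat ** A) $ 1 $ 5 = (A $ 2 $ 1)"
  by (simp add: sum_6 J_entries sh_simps[OF assms] mat_def matrix_matrix_mult_def matrix_vector_mult_def)

lemma D_1_5: assumes "skew_hamiltonian A" shows "(Jmat ** A ** A) $ 1 $ 5 = (A $ 0 $ 1)*(A $ 2 $ 0) - (A $ 0 $ 5)*(A $ 3 $ 1) + (A $ 1 $ 1)*(A $ 2 $ 1) + (A $ 2 $ 1)*(A $ 2 $ 2)"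
  by (simp add: sum_6 J_entries sh_simps[OF assms] mat_def matrix_matrix_mult_def matrix_vector_mult_def; simp add: algebra_simps power2_eq_square)

lemma B_2_0: assumes "skew_hamiltonian A" shows "(Jmat ** A) $ 2 $ 0 = - (A $ 3 $ 2)"
  by (simp add: sum_6 J_entries sh_simps[OF assms] mat_def matrix_matrix_mult_def matrix_vector_mult_def)

lemma D_2_0: assumes "skew_hamiltonian A" shows "(Jmat ** A ** A) $ 2 $ 0 = - (A $ 0 $ 0)*(A $ 3 $ 2) - (A $ 1 $ 0)*(A $ 4 $ 2) - (A $ 1 $ 2)*(A $ 3 $ 1) - (A $ 2 $ 2)*(A $ 3 $ 2)"
  by (simp add: sum_6 J_entries sh_simps[OF assms] mat_def matrix_matrix_mult_def matrix_vector_mult_def; simp add: algebra_simps power2_eq_square)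

lemma B_2_1: assumes "skew_hamiltonian A" shows "(Jmat ** A) $ 2 $ 1 = - (A $ 4 $ 2)"
  by (simp add: sum_6 J_entries sh_simps[OF assms] mat_def matrix_matrix_mult_def matrix_vector_mult_def)

lemma D_2_1: assumes "skew_hamiltonian A" shows "(Jmat ** A ** A) $ 2 $ 1 = - (A $ 0 $ 1)*(A $ 3 $ 2) + (A $ 0 $ 2)*(A $ 3 $ 1) - (A $ 1 $ 1)*(A $ 4 $ 2) - (A $ 2 $ 2)*(A $ 4 $ 2)"
  by (simp add: sum_6 J_entries sh_simps[OF assms] mat_def matrix_matrix_mult_def matrix_vector_mult_def; simp add: algebra_simps power2_eq_square)

lemma B_2_2: assumes "skew_hamiltonian A" shows "(Jmat ** A) $ 2 $ 2 = 0"
  by (simp add: sum_6 J_entries sh_simps[OF assms] mat_def matrix_matrix_mult_def matrix_vector_mult_def)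

lemma D_2_2: assumes "skew_hamiltonian A" shows "(Jmat ** A ** A) $ 2 $ 2 = 0"
  by (simp add: sum_6 J_entries sh_simps[OF assms] mat_def matrix_matrix_mult_def matrix_vector_mult_def; simp add: algebra_simps power2_eq_square)

lemma B_2_3: assumes "skew_hamiltonian A" shows "(Jmat ** A) $ 2 $ 3 = (A $ 0 $ 2)"
  by (simp add: sum_6 J_entries sh_simps[OF assms] mat_def matrix_matrix_mult_def matrix_vector_mult_def)

lemma D_2_3: assumes "skew_hamiltonian A" shows "(Jmat ** A ** A) $ 2 $ 3 = (A $ 0 $ 0)*(A $ 0 $ 2) + (A $ 0 $ 1)*(A $ 1 $ 2) + (A $ 0 $ 2)*(A $ 2 $ 2) + (A $ 0 $ 4)*(A $ 4 $ 2)"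
  by (simp add: sum_6 J_entries sh_simps[OF assms] mat_def matrix_matrix_mult_def matrix_vector_mult_def; simp add: algebra_simps power2_eq_square)

lemma B_2_4: assumes "skew_hamiltonian A" shows "(Jmat ** A) $ 2 $ 4 = (A $ 1 $ 2)"
  by (simp add: sum_6 J_entries sh_simps[OF assms] mat_def matrix_matrix_mult_def matrix_vector_mult_def)

lemma D_2_4: assumes "skew_hamiltonian A" shows "(Jmat ** A ** A) $ 2 $ 4 = (A $ 0 $ 2)*(A $ 1 $ 0) - (A $ 0 $ 4)*(A $ 3 $ 2) + (A $ 1 $ 1)*(A $ 1 $ 2) + (A $ 1 $ 2)*(A $ 2 $ 2)"
  by (simp add: sum_6 J_entries sh_simps[OF assms] mat_def matrix_matrix_mult_def matrix_vector_mult_def; simp add: algebra_simps power2_eq_square)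

lemma B_2_5: assumes "skew_hamiltonian A" shows "(Jmat ** A) $ 2 $ 5 = (A $ 2 $ 2)"
  by (simp add: sum_6 J_entries sh_simps[OF assms] mat_def matrix_matrix_mult_def matrix_vector_mult_def)

lemma D_2_5: assumes "skew_hamiltonian A" shows "(Jmat ** A ** A) $ 2 $ 5 = (A $ 0 $ 2)*(A $ 2 $ 0) - (A $ 0 $ 5)*(A $ 3 $ 2) + (A $ 1 $ 2)*(A $ 2 $ 1) - (A $ 1 $ 5)*(A $ 4 $ 2) + (A $ 2 $ 2)*(A $ 2 $ 2)"
  by (simp add: sum_6 J_entries sh_simps[OF assms] mat_def matrix_matrix_mult_def matrix_vector_mult_def; simp add: algebra_simps power2_eq_square)

lemma B_3_0: assumes "skew_hamiltonian A" shows "(Jmat ** A) $ 3 $ 0 = - (A $ 0 $ 0)"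
  by (simp add: sum_6 J_entries sh_simps[OF assms] mat_def matrix_matrix_mult_def matrix_vector_mult_def)

lemma D_3_0: assumes "skew_hamiltonian A" shows "(Jmat ** A ** A) $ 3 $ 0 = - (A $ 0 $ 0)*(A $ 0 $ 0) - (A $ 0 $ 1)*(A $ 1 $ 0) - (A $ 0 $ 2)*(A $ 2 $ 0) + (A $ 0 $ 4)*(A $ 3 $ 1) + (A $ 0 $ 5)*(A $ 3 $ 2)"
  by (simp add: sum_6 J_entries sh_simps[OF assms] mat_def matrix_matrix_mult_def matrix_vector_mult_def; simp add: algebra_simps power2_eq_square)

lemma B_3_1: assumes "skew_hamiltonian A" shows "(Jmat ** A) $ 3 $ 1 = - (A $ 0 $ 1)"
  by (simp add: sum_6 J_entries sh_simps[OF assms] mat_def matrix_matrix_mult_def matrix_vector_mult_def)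

lemma D_3_1: assumes "skew_hamiltonian A" shows "(Jmat ** A ** A) $ 3 $ 1 = - (A $ 0 $ 0)*(A $ 0 $ 1) - (A $ 0 $ 1)*(A $ 1 $ 1) - (A $ 0 $ 2)*(A $ 2 $ 1) + (A $ 0 $ 5)*(A $ 4 $ 2)"
  by (simp add: sum_6 J_entries sh_simps[OF assms] mat_def matrix_matrix_mult_def matrix_vector_mult_def; simp add: algebra_simps power2_eq_square)

lemma B_3_2: assumes "skew_hamiltonian A" shows "(Jmat ** A) $ 3 $ 2 = - (A $ 0 $ 2)"
  by (simp add: sum_6 J_entries sh_simps[OF assms] mat_def matrix_matrix_mult_def matrix_vector_mult_def)

lemma D_3_2: assumes "skew_hamiltonian A" shows "(Jmat ** A ** A) $ 3 $ 2 = - (A $ 0 $ 0)*(A $ 0 $ 2) - (A $ 0 $ 1)*(A $ 1 $ 2) - (A $ 0 $ 2)*(A $ 2 $ 2) - (A $ 0 $ 4)*(A $ 4 $ 2)"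
  by (simp add: sum_6 J_entries sh_simps[OF assms] mat_def matrix_matrix_mult_def matrix_vector_mult_def; simp add: algebra_simps power2_eq_square)

lemma B_3_3: assumes "skew_hamiltonian A" shows "(Jmat ** A) $ 3 $ 3 = 0"
  by (simp add: sum_6 J_entries sh_simps[OF assms] mat_def matrix_matrix_mult_def matrix_vector_mult_def)

lemma D_3_3: assumes "skew_hamiltonian A" shows "(Jmat ** A ** A) $ 3 $ 3 = 0"
  by (simp add: sum_6 J_entries sh_simps[OF assms] mat_def matrix_matrix_mult_def matrix_vector_mult_def; simp add: algebra_simps power2_eq_square)

lemma B_3_4: assumes "skew_hamiltonian A" shows "(Jmat ** A) $ 3 $ 4 = - (A $ 0 $ 4)"
  by (simp add: sum_6 J_entries sh_simps[OF assms] mat_def matrix_matrix_mult_def matrix_vector_mult_def)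

lemma D_3_4: assumes "skew_hamiltonian A" shows "(Jmat ** A ** A) $ 3 $ 4 = - (A $ 0 $ 0)*(A $ 0 $ 4) + (A $ 0 $ 2)*(A $ 1 $ 5) - (A $ 0 $ 4)*(A $ 1 $ 1) - (A $ 0 $ 5)*(A $ 1 $ 2)"
  by (simp add: sum_6 J_entries sh_simps[OF assms] mat_def matrix_matrix_mult_def matrix_vector_mult_def; simp add: algebra_simps power2_eq_square)

lemma B_3_5: assumes "skew_hamiltonian A" shows "(Jmat ** A) $ 3 $ 5 = - (A $ 0 $ 5)"
  by (simp add: sum_6 J_entries sh_simps[OF assms] mat_def matrix_matrix_mult_def matrix_vector_mult_def)

lemma D_3_5: assumes "skew_hamiltonian A" shows "(Jmat ** A ** A) $ 3 $ 5 = - (A $ 0 $ 0)*(A $ 0 $ 5) - (A $ 0 $ 1)*(A $ 1 $ 5) - (A $ 0 $ 4)*(A $ 2 $ 1) - (A $ 0 $ 5)*(A $ 2 $ 2)"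
  by (simp add: sum_6 J_entries sh_simps[OF assms] mat_def matrix_matrix_mult_def matrix_vector_mult_def; simp add: algebra_simps power2_eq_square)

lemma B_4_0: assumes "skew_hamiltonian A" shows "(Jmat ** A) $ 4 $ 0 = - (A $ 1 $ 0)"
  by (simp add: sum_6 J_entries sh_simps[OF assms] mat_def matrix_matrix_mult_def matrix_vector_mult_def)

lemma D_4_0: assumes "skew_hamiltonian A" shows "(Jmat ** A ** A) $ 4 $ 0 = - (A $ 0 $ 0)*(A $ 1 $ 0) - (A $ 1 $ 0)*(A $ 1 $ 1) - (A $ 1 $ 2)*(A $ 2 $ 0) + (A $ 1 $ 5)*(A $ 3 $ 2)"
  by (simp add: sum_6 J_entries sh_simps[OF assms] mat_def matrix_matrix_mult_def matrix_vector_mult_def; simp add: algebra_simps power2_eq_square)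

lemma B_4_1: assumes "skew_hamiltonian A" shows "(Jmat ** A) $ 4 $ 1 = - (A $ 1 $ 1)"
  by (simp add: sum_6 J_entries sh_simps[OF assms] mat_def matrix_matrix_mult_def matrix_vector_mult_def)

lemma D_4_1: assumes "skew_hamiltonian A" shows "(Jmat ** A ** A) $ 4 $ 1 = - (A $ 0 $ 1)*(A $ 1 $ 0) + (A $ 0 $ 4)*(A $ 3 $ 1) - (A $ 1 $ 1)*(A $ 1 $ 1) - (A $ 1 $ 2)*(A $ 2 $ 1) + (A $ 1 $ 5)*(A $ 4 $ 2)"
  by (simp add: sum_6 J_entries sh_simps[OF assms] mat_def matrix_matrix_mult_def matrix_vector_mult_def; simp add: algebra_simps power2_eq_square)

lemma B_4_2: assumes "skew_hamiltonian A" shows "(Jmat ** A) $ 4 $ 2 = - (A $ 1 $ 2)"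
  by (simp add: sum_6 J_entries sh_simps[OF assms] mat_def matrix_matrix_mult_def matrix_vector_mult_def)

lemma D_4_2: assumes "skew_hamiltonian A" shows "(Jmat ** A ** A) $ 4 $ 2 = - (A $ 0 $ 2)*(A $ 1 $ 0) + (A $ 0 $ 4)*(A $ 3 $ 2) - (A $ 1 $ 1)*(A $ 1 $ 2) - (A $ 1 $ 2)*(A $ 2 $ 2)"
  by (simp add: sum_6 J_entries sh_simps[OF assms] mat_def matrix_matrix_mult_def matrix_vector_mult_def; simp add: algebra_simps power2_eq_square)

lemma B_4_3: assumes "skew_hamiltonian A" shows "(Jmat ** A) $ 4 $ 3 = (A $ 0 $ 4)"
  by (simp add: sum_6 J_entries sh_simps[OF assms] mat_def matrix_matrix_mult_def matrix_vector_mult_def)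

lemma D_4_3: assumes "skew_hamiltonian A" shows "(Jmat ** A ** A) $ 4 $ 3 = (A $ 0 $ 0)*(A $ 0 $ 4) - (A $ 0 $ 2)*(A $ 1 $ 5) + (A $ 0 $ 4)*(A $ 1 $ 1) + (A $ 0 $ 5)*(A $ 1 $ 2)"
  by (simp add: sum_6 J_entries sh_simps[OF assms] mat_def matrix_matrix_mult_def matrix_vector_mult_def; simp add: algebra_simps power2_eq_square)

lemma B_4_4: assumes "skew_hamiltonian A" shows "(Jmat ** A) $ 4 $ 4 = 0"
  by (simp add: sum_6 J_entries sh_simps[OF assms] mat_def matrix_matrix_mult_def matrix_vector_mult_def)

lemma D_4_4: assumes "skew_hamiltonian A" shows "(Jmat ** A ** A) $ 4 $ 4 = 0"
  by (simp add: sum_6 J_entries sh_simps[OF assms] mat_def matrix_matrix_mult_def matrix_vector_mult_def; simp add: algebra_simps power2_eq_square)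

lemma B_4_5: assumes "skew_hamiltonian A" shows "(Jmat ** A) $ 4 $ 5 = - (A $ 1 $ 5)"
  by (simp add: sum_6 J_entries sh_simps[OF assms] mat_def matrix_matrix_mult_def matrix_vector_mult_def)

lemma D_4_5: assumes "skew_hamiltonian A" shows "(Jmat ** A ** A) $ 4 $ 5 = (A $ 0 $ 4)*(A $ 2 $ 0) - (A $ 0 $ 5)*(A $ 1 $ 0) - (A $ 1 $ 1)*(A $ 1 $ 5) - (A $ 1 $ 5)*(A $ 2 $ 2)"
  by (simp add: sum_6 J_entries sh_simps[OF assms] mat_def matrix_matrix_mult_def matrix_vector_mult_def; simp add: algebra_simps power2_eq_square)

lemma B_5_0: assumes "skew_hamiltonian A" shows "(Jmat ** A) $ 5 $ 0 = - (A $ 2 $ 0)"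
  by (simp add: sum_6 J_entries sh_simps[OF assms] mat_def matrix_matrix_mult_def matrix_vector_mult_def)

lemma D_5_0: assumes "skew_hamiltonian A" shows "(Jmat ** A ** A) $ 5 $ 0 = - (A $ 0 $ 0)*(A $ 2 $ 0) - (A $ 1 $ 0)*(A $ 2 $ 1) - (A $ 1 $ 5)*(A $ 3 $ 1) - (A $ 2 $ 0)*(A $ 2 $ 2)"
  by (simp add: sum_6 J_entries sh_simps[OF assms] mat_def matrix_matrix_mult_def matrix_vector_mult_def; simp add: algebra_simps power2_eq_square)

lemma B_5_1: assumes "skew_hamiltonian A" shows "(Jmat ** A) $ 5 $ 1 = - (A $ 2 $ 1)"
  by (simp add: sum_6 J_entries sh_simps[OF assms] mat_def matrix_matrix_mult_def matrix_vector_mult_def)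

lemma D_5_1: assumes "skew_hamiltonian A" shows "(Jmat ** A ** A) $ 5 $ 1 = - (A $ 0 $ 1)*(A $ 2 $ 0) + (A $ 0 $ 5)*(A $ 3 $ 1) - (A $ 1 $ 1)*(A $ 2 $ 1) - (A $ 2 $ 1)*(A $ 2 $ 2)"
  by (simp add: sum_6 J_entries sh_simps[OF assms] mat_def matrix_matrix_mult_def matrix_vector_mult_def; simp add: algebra_simps power2_eq_square)

lemma B_5_2: assumes "skew_hamiltonian A" shows "(Jmat ** A) $ 5 $ 2 = - (A $ 2 $ 2)"
  by (simp add: sum_6 J_entries sh_simps[OF assms] mat_def matrix_matrix_mult_def matrix_vector_mult_def)

lemma D_5_2: assumes "skew_hamiltonian A" shows "(Jmat ** A ** A) $ 5 $ 2 = - (A $ 0 $ 2)*(A $ 2 $ 0) + (A $ 0 $ 5)*(A $ 3 $ 2) - (A $ 1 $ 2)*(A $ 2 $ 1) + (A $ 1 $ 5)*(A $ 4 $ 2) - (A $ 2 $ 2)*(A $ 2 $ 2)"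
  by (simp add: sum_6 J_entries sh_simps[OF assms] mat_def matrix_matrix_mult_def matrix_vector_mult_def; simp add: algebra_simps power2_eq_square)

lemma B_5_3: assumes "skew_hamiltonian A" shows "(Jmat ** A) $ 5 $ 3 = (A $ 0 $ 5)"
  by (simp add: sum_6 J_entries sh_simps[OF assms] mat_def matrix_matrix_mult_def matrix_vector_mult_def)

lemma D_5_3: assumes "skew_hamiltonian A" shows "(Jmat ** A ** A) $ 5 $ 3 = (A $ 0 $ 0)*(A $ 0 $ 5) + (A $ 0 $ 1)*(A $ 1 $ 5) + (A $ 0 $ 4)*(A $ 2 $ 1) + (A $ 0 $ 5)*(A $ 2 $ 2)"
  by (simp add: sum_6 J_entries sh_simps[OF assms] mat_def matrix_matrix_mult_def matrix_vector_mult_def; simp add: algebra_simps power2_eq_square)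

lemma B_5_4: assumes "skew_hamiltonian A" shows "(Jmat ** A) $ 5 $ 4 = (A $ 1 $ 5)"
  by (simp add: sum_6 J_entries sh_simps[OF assms] mat_def matrix_matrix_mult_def matrix_vector_mult_def)

lemma D_5_4: assumes "skew_hamiltonian A" shows "(Jmat ** A ** A) $ 5 $ 4 = - (A $ 0 $ 4)*(A $ 2 $ 0) + (A $ 0 $ 5)*(A $ 1 $ 0) + (A $ 1 $ 1)*(A $ 1 $ 5) + (A $ 1 $ 5)*(A $ 2 $ 2)"
  by (simp add: sum_6 J_entries sh_simps[OF assms] mat_def matrix_matrix_mult_def matrix_vector_mult_def; simp add: algebra_simps power2_eq_square)

lemma B_5_5: assumes "skew_hamiltonian A" shows "(Jmat ** A) $ 5 $ 5 = 0"
  by (simp add: sum_6 J_entries sh_simps[OF assms] mat_def matrix_matrix_mult_def matrix_vector_mult_def)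

lemma D_5_5: assumes "skew_hamiltonian A" shows "(Jmat ** A ** A) $ 5 $ 5 = 0"
  by (simp add: sum_6 J_entries sh_simps[OF assms] mat_def matrix_matrix_mult_def matrix_vector_mult_def; simp add: algebra_simps power2_eq_square)

lemma V0_0: shows "(Jmat *v w) $ 0 = (w $ 3)"
  by (simp add: sum_6 J_entries matrix_vector_mult_def)

lemma V1_0: assumes "skew_hamiltonian A" shows "(Jmat *v ((A - (trace A / 2) *\<^sub>R mat 1) *v w)) $ 0 = (A $ 1 $ 0)*(w $ 4) - (A $ 1 $ 1)*(w $ 3) + (A $ 2 $ 0)*(w $ 5) - (A $ 2 $ 2)*(w $ 3) + (A $ 3 $ 1)*(w $ 1) + (A $ 3 $ 2)*(w $ 2)"
  unfolding L_tr[OF assms] by (simp add: sum_6 J_entries sh_simps[OF assms] mat_def matrix_matrix_mult_def matrix_vector_mult_def; simp add: field_simps power2_eq_square)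

lemma V2_0: assumes "skew_hamiltonian A" shows "(Jmat *v ((A ** A - (trace A / 2) *\<^sub>R A + ((trace A)^2 / 8 - trace (A ** A) / 4) *\<^sub>R mat 1) *v w)) $ 0 = (A $ 1 $ 0)*(A $ 2 $ 1)*(w $ 5) - (A $ 1 $ 0)*(A $ 2 $ 2)*(w $ 4) + (A $ 1 $ 0)*(A $ 4 $ 2)*(w $ 2) - (A $ 1 $ 1)*(A $ 2 $ 0)*(w $ 5) + (A $ 1 $ 1)*(A $ 2 $ 2)*(w $ 3) - (A $ 1 $ 1)*(A $ 3 $ 2)*(w $ 2) + (A $ 1 $ 2)*(A $ 2 $ 0)*(w $ 4) - (A $ 1 $ 2)*(A $ 2 $ 1)*(w $ 3) + (A $ 1 $ 2)*(A $ 3 $ 1)*(w $ 2) + (A $ 1 $ 5)*(A $ 3 $ 1)*(w $ 5) - (A $ 1 $ 5)*(A $ 3 $ 2)*(w $ 4) + (A $ 1 $ 5)*(A $ 4 $ 2)*(w $ 3) - (A $ 2 $ 0)*(A $ 4 $ 2)*(w $ 1) + (A $ 2 $ 1)*(A $ 3 $ 2)*(w $ 1) - (A $ 2 $ 2)*(A $ 3 $ 1)*(w $ 1)"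
  unfolding L_trAA[OF assms] L_tr[OF assms] by (simp add: sum_6 J_entries sh_simps[OF assms] mat_def matrix_matrix_mult_def matrix_vector_mult_def; simp add: field_simps power2_eq_square)

lemma V0_1: shows "(Jmat *v w) $ 1 = (w $ 4)"
  by (simp add: sum_6 J_entries matrix_vector_mult_def)

lemma V1_1: assumes "skew_hamiltonian A" shows "(Jmat *v ((A - (trace A / 2) *\<^sub>R mat 1) *v w)) $ 1 = - (A $ 0 $ 0)*(w $ 4) + (A $ 0 $ 1)*(w $ 3) + (A $ 2 $ 1)*(w $ 5) - (A $ 2 $ 2)*(w $ 4) - (A $ 3 $ 1)*(w $ 0) + (A $ 4 $ 2)*(w $ 2)"
  unfolding L_tr[OF assms] by (simp add: sum_6 J_entries sh_simps[OF assms] mat_def matrix_matrix_mult_def matrix_vector_mult_def; simp add: field_simps power2_eq_square)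

lemma V2_1: assumes "skew_hamiltonian A" shows "(Jmat *v ((A ** A - (trace A / 2) *\<^sub>R A + ((trace A)^2 / 8 - trace (A ** A) / 4) *\<^sub>R mat 1) *v w)) $ 1 = - (A $ 0 $ 0)*(A $ 2 $ 1)*(w $ 5) + (A $ 0 $ 0)*(A $ 2 $ 2)*(w $ 4) - (A $ 0 $ 0)*(A $ 4 $ 2)*(w $ 2) + (A $ 0 $ 1)*(A $ 2 $ 0)*(w $ 5) - (A $ 0 $ 1)*(A $ 2 $ 2)*(w $ 3) + (A $ 0 $ 1)*(A $ 3 $ 2)*(w $ 2) - (A $ 0 $ 2)*(A $ 2 $ 0)*(w $ 4) + (A $ 0 $ 2)*(A $ 2 $ 1)*(w $ 3) - (A $ 0 $ 2)*(A $ 3 $ 1)*(w $ 2) - (A $ 0 $ 5)*(A $ 3 $ 1)*(w $ 5) + (A $ 0 $ 5)*(A $ 3 $ 2)*(w $ 4) - (A $ 0 $ 5)*(A $ 4 $ 2)*(w $ 3) + (A $ 2 $ 0)*(A $ 4 $ 2)*(w $ 0) - (A $ 2 $ 1)*(A $ 3 $ 2)*(w $ 0) + (A $ 2 $ 2)*(A $ 3 $ 1)*(w $ 0)"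
  unfolding L_trAA[OF assms] L_tr[OF assms] by (simp add: sum_6 J_entries sh_simps[OF assms] mat_def matrix_matrix_mult_def matrix_vector_mult_def; simp add: field_simps power2_eq_square)

lemma V0_2: shows "(Jmat *v w) $ 2 = (w $ 5)"
  by (simp add: sum_6 J_entries matrix_vector_mult_def)

lemma V1_2: assumes "skew_hamiltonian A" shows "(Jmat *v ((A - (trace A / 2) *\<^sub>R mat 1) *v w)) $ 2 = - (A $ 0 $ 0)*(w $ 5) + (A $ 0 $ 2)*(w $ 3) - (A $ 1 $ 1)*(w $ 5) + (A $ 1 $ 2)*(w $ 4) - (A $ 3 $ 2)*(w $ 0) - (A $ 4 $ 2)*(w $ 1)"
  unfolding L_tr[OF assms] by (simp add: sum_6 J_entries sh_simps[OF assms] mat_def matrix_matrix_mult_def matrix_vector_mult_def; simp add: field_simps power2_eq_square)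

lemma V2_2: assumes "skew_hamiltonian A" shows "(Jmat *v ((A ** A - (trace A / 2) *\<^sub>R A + ((trace A)^2 / 8 - trace (A ** A) / 4) *\<^sub>R mat 1) *v w)) $ 2 = (A $ 0 $ 0)*(A $ 1 $ 1)*(w $ 5) - (A $ 0 $ 0)*(A $ 1 $ 2)*(w $ 4) + (A $ 0 $ 0)*(A $ 4 $ 2)*(w $ 1) - (A $ 0 $ 1)*(A $ 1 $ 0)*(w $ 5) + (A $ 0 $ 1)*(A $ 1 $ 2)*(w $ 3) - (A $ 0 $ 1)*(A $ 3 $ 2)*(w $ 1) + (A $ 0 $ 2)*(A $ 1 $ 0)*(w $ 4) - (A $ 0 $ 2)*(A $ 1 $ 1)*(w $ 3) + (A $ 0 $ 2)*(A $ 3 $ 1)*(w $ 1) + (A $ 0 $ 4)*(A $ 3 $ 1)*(w $ 5) - (A $ 0 $ 4)*(A $ 3 $ 2)*(w $ 4) + (A $ 0 $ 4)*(A $ 4 $ 2)*(w $ 3) - (A $ 1 $ 0)*(A $ 4 $ 2)*(w $ 0) + (A $ 1 $ 1)*(A $ 3 $ 2)*(w $ 0) - (A $ 1 $ 2)*(A $ 3 $ 1)*(w $ 0)"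
  unfolding L_trAA[OF assms] L_tr[OF assms] by (simp add: sum_6 J_entries sh_simps[OF assms] mat_def matrix_matrix_mult_def matrix_vector_mult_def; simp add: field_simps power2_eq_square)

lemma V0_3: shows "(Jmat *v w) $ 3 = - (w $ 0)"
  by (simp add: sum_6 J_entries matrix_vector_mult_def)

lemma V1_3: assumes "skew_hamiltonian A" shows "(Jmat *v ((A - (trace A / 2) *\<^sub>R mat 1) *v w)) $ 3 = - (A $ 0 $ 1)*(w $ 1) - (A $ 0 $ 2)*(w $ 2) - (A $ 0 $ 4)*(w $ 4) - (A $ 0 $ 5)*(w $ 5) + (A $ 1 $ 1)*(w $ 0) + (A $ 2 $ 2)*(w $ 0)"
  unfolding L_tr[OF assms] by (simp add: sum_6 J_entries sh_simps[OF assms] mat_def matrix_matrix_mult_def matrix_vector_mult_def; simp add: field_simps power2_eq_square)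

lemma V2_3: assumes "skew_hamiltonian A" shows "(Jmat *v ((A ** A - (trace A / 2) *\<^sub>R A + ((trace A)^2 / 8 - trace (A ** A) / 4) *\<^sub>R mat 1) *v w)) $ 3 = - (A $ 0 $ 1)*(A $ 1 $ 2)*(w $ 2) - (A $ 0 $ 1)*(A $ 1 $ 5)*(w $ 5) + (A $ 0 $ 1)*(A $ 2 $ 2)*(w $ 1) + (A $ 0 $ 2)*(A $ 1 $ 1)*(w $ 2) + (A $ 0 $ 2)*(A $ 1 $ 5)*(w $ 4) - (A $ 0 $ 2)*(A $ 2 $ 1)*(w $ 1) - (A $ 0 $ 4)*(A $ 2 $ 1)*(w $ 5) + (A $ 0 $ 4)*(A $ 2 $ 2)*(w $ 4) - (A $ 0 $ 4)*(A $ 4 $ 2)*(w $ 2) + (A $ 0 $ 5)*(A $ 1 $ 1)*(w $ 5) - (A $ 0 $ 5)*(A $ 1 $ 2)*(w $ 4) + (A $ 0 $ 5)*(A $ 4 $ 2)*(w $ 1) - (A $ 1 $ 1)*(A $ 2 $ 2)*(w $ 0) + (A $ 1 $ 2)*(A $ 2 $ 1)*(w $ 0) - (A $ 1 $ 5)*(A $ 4 $ 2)*(w $ 0)"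
  unfolding L_trAA[OF assms] L_tr[OF assms] by (simp add: sum_6 J_entries sh_simps[OF assms] mat_def matrix_matrix_mult_def matrix_vector_mult_def; simp add: field_simps power2_eq_square)

lemma V0_4: shows "(Jmat *v w) $ 4 = - (w $ 1)"
  by (simp add: sum_6 J_entries matrix_vector_mult_def)

lemma V1_4: assumes "skew_hamiltonian A" shows "(Jmat *v ((A - (trace A / 2) *\<^sub>R mat 1) *v w)) $ 4 = (A $ 0 $ 0)*(w $ 1) + (A $ 0 $ 4)*(w $ 3) - (A $ 1 $ 0)*(w $ 0) - (A $ 1 $ 2)*(w $ 2) - (A $ 1 $ 5)*(w $ 5) + (A $ 2 $ 2)*(w $ 1)"
  unfolding L_tr[OF assms] by (simp add: sum_6 J_entries sh_simps[OF assms] mat_def matrix_matrix_mult_def matrix_vector_mult_def; simp add: field_simps power2_eq_square)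

lemma V2_4: assumes "skew_hamiltonian A" shows "(Jmat *v ((A ** A - (trace A / 2) *\<^sub>R A + ((trace A)^2 / 8 - trace (A ** A) / 4) *\<^sub>R mat 1) *v w)) $ 4 = (A $ 0 $ 0)*(A $ 1 $ 2)*(w $ 2) + (A $ 0 $ 0)*(A $ 1 $ 5)*(w $ 5) - (A $ 0 $ 0)*(A $ 2 $ 2)*(w $ 1) - (A $ 0 $ 2)*(A $ 1 $ 0)*(w $ 2) - (A $ 0 $ 2)*(A $ 1 $ 5)*(w $ 3) + (A $ 0 $ 2)*(A $ 2 $ 0)*(w $ 1) + (A $ 0 $ 4)*(A $ 2 $ 0)*(w $ 5) - (A $ 0 $ 4)*(A $ 2 $ 2)*(w $ 3) + (A $ 0 $ 4)*(A $ 3 $ 2)*(w $ 2) - (A $ 0 $ 5)*(A $ 1 $ 0)*(w $ 5) + (A $ 0 $ 5)*(A $ 1 $ 2)*(w $ 3) - (A $ 0 $ 5)*(A $ 3 $ 2)*(w $ 1) + (A $ 1 $ 0)*(A $ 2 $ 2)*(w $ 0) - (A $ 1 $ 2)*(A $ 2 $ 0)*(w $ 0) + (A $ 1 $ 5)*(A $ 3 $ 2)*(w $ 0)"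
  unfolding L_trAA[OF assms] L_tr[OF assms] by (simp add: sum_6 J_entries sh_simps[OF assms] mat_def matrix_matrix_mult_def matrix_vector_mult_def; simp add: field_simps power2_eq_square)

lemma V0_5: shows "(Jmat *v w) $ 5 = - (w $ 2)"
  by (simp add: sum_6 J_entries matrix_vector_mult_def)

lemma V1_5: assumes "skew_hamiltonian A" shows "(Jmat *v ((A - (trace A / 2) *\<^sub>R mat 1) *v w)) $ 5 = (A $ 0 $ 0)*(w $ 2) + (A $ 0 $ 5)*(w $ 3) + (A $ 1 $ 1)*(w $ 2) + (A $ 1 $ 5)*(w $ 4) - (A $ 2 $ 0)*(w $ 0) - (A $ 2 $ 1)*(w $ 1)"
  unfolding L_tr[OF assms] by (simp add: sum_6 J_entries sh_simps[OF assms] mat_def matrix_matrix_mult_def matrix_vector_mult_def; simp add: field_simps power2_eq_square)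

lemma V2_5: assumes "skew_hamiltonian A" shows "(Jmat *v ((A ** A - (trace A / 2) *\<^sub>R A + ((trace A)^2 / 8 - trace (A ** A) / 4) *\<^sub>R mat 1) *v w)) $ 5 = - (A $ 0 $ 0)*(A $ 1 $ 1)*(w $ 2) - (A $ 0 $ 0)*(A $ 1 $ 5)*(w $ 4) + (A $ 0 $ 0)*(A $ 2 $ 1)*(w $ 1) + (A $ 0 $ 1)*(A $ 1 $ 0)*(w $ 2) + (A $ 0 $ 1)*(A $ 1 $ 5)*(w $ 3) - (A $ 0 $ 1)*(A $ 2 $ 0)*(w $ 1) - (A $ 0 $ 4)*(A $ 2 $ 0)*(w $ 4) + (A $ 0 $ 4)*(A $ 2 $ 1)*(w $ 3) - (A $ 0 $ 4)*(A $ 3 $ 1)*(w $ 2) + (A $ 0 $ 5)*(A $ 1 $ 0)*(w $ 4) - (A $ 0 $ 5)*(A $ 1 $ 1)*(w $ 3) + (A $ 0 $ 5)*(A $ 3 $ 1)*(w $ 1) - (A $ 1 $ 0)*(A $ 2 $ 1)*(w $ 0) + (A $ 1 $ 1)*(A $ 2 $ 0)*(w $ 0) - (A $ 1 $ 5)*(A $ 3 $ 1)*(w $ 0)"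
  unfolding L_trAA[OF assms] L_tr[OF assms] by (simp add: sum_6 J_entries sh_simps[OF assms] mat_def matrix_matrix_mult_def matrix_vector_mult_def; simp add: field_simps power2_eq_square)

lemmas B_simps = B_0_0 B_0_1 B_0_2 B_0_3 B_0_4 B_0_5 B_1_0 B_1_1 B_1_2 B_1_3 B_1_4 B_1_5 B_2_0 B_2_1 B_2_2 B_2_3 B_2_4 B_2_5 B_3_0 B_3_1 B_3_2 B_3_3 B_3_4 B_3_5 B_4_0 B_4_1 B_4_2 B_4_3 B_4_4 B_4_5 B_5_0 B_5_1 B_5_2 B_5_3 B_5_4 B_5_5

lemmas D_simps = D_0_0 D_0_1 D_0_2 D_0_3 D_0_4 D_0_5 D_1_0 D_1_1 D_1_2 D_1_3 D_1_4 D_1_5 D_2_0 D_2_1 D_2_2 D_2_3 D_2_4 D_2_5 D_3_0 D_3_1 D_3_2 D_3_3 D_3_4 D_3_5 D_4_0 D_4_1 D_4_2 D_4_3 D_4_4 D_4_5 D_5_0 D_5_1 D_5_2 D_5_3 D_5_4 D_5_5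

lemmas V0_simps = V0_0 V0_1 V0_2 V0_3 V0_4 V0_5

lemmas V1_simps = V1_0 V1_1 V1_2 V1_3 V1_4 V1_5

lemmas V2_simps = V2_0 V2_1 V2_2 V2_3 V2_4 V2_5

lemma idI_all: assumes "skew_hamiltonian A"
  shows "\<forall>i j k. tri A ((A ** A - (trace A / 2) *\<^sub>R A + ((trace A)^2 / 8 - trace (A ** A) / 4) *\<^sub>R mat 1) *v w)
    ((A - (trace A / 2) *\<^sub>R mat 1) *v w) w i j k = 0"
  unfolding forall_6 tri_def
  unfolding V1_simps[OF assms] V2_simps[OF assms]
  unfolding V0_simps B_simps[OF assms] D_simps[OF assms] J_entries
  by (intro conjI; simp; simp add: algebra_simps)



definition ca :: "real^6^6 \<Rightarrow> real" where "ca A = trace A / 2"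
definition cb :: "real^6^6 \<Rightarrow> real" where "cb A = (trace A)^2 / 8 - trace (A ** A) / 4"
definition cc :: "real^6^6 \<Rightarrow> real" where
  "cc A = ((trace A / 2)^3 - 3 * (trace A / 2) * (trace (A ** A) / 2) + 2 * (trace (A ** A ** A) / 2)) / 6"
definition Dv :: "real^6^6 \<Rightarrow> real" where
  "Dv A = 27 * (cc A)^2 + 4 * (cb A)^3 - 18 * ca A * cb A * cc A - (ca A)^2 * (cb A)^2 + 4 * (ca A)^3 * cc A"

lemma L_trAAA: assumes "skew_hamiltonian A" shows "trace (A ** A ** A) = 6*(A $ 0 $ 0)*(A $ 0 $ 1)*(A $ 1 $ 0) + 6*(A $ 0 $ 0)*(A $ 0 $ 2)*(A $ 2 $ 0) - 6*(A $ 0 $ 0)*(A $ 0 $ 4)*(A $ 3 $ 1) - 6*(A $ 0 $ 0)*(A $ 0 $ 5)*(A $ 3 $ 2) + 2*(A $ 0 $ 0)*(A $ 0 $ 0)*(A $ 0 $ 0) + 6*(A $ 0 $ 1)*(A $ 1 $ 0)*(A $ 1 $ 1) + 6*(A $ 0 $ 1)*(A $ 1 $ 2)*(A $ 2 $ 0) - 6*(A $ 0 $ 1)*(A $ 1 $ 5)*(A $ 3 $ 2) + 6*(A $ 0 $ 2)*(A $ 1 $ 0)*(A $ 2 $ 1) + 6*(A $ 0 $ 2)*(A $ 1 $ 5)*(A $ 3 $ 1) + 6*(A $ 0 $ 2)*(A $ 2 $ 0)*(A $ 2 $ 2) - 6*(A $ 0 $ 4)*(A $ 1 $ 1)*(A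 $ 3 $ 1) + 6*(A $ 0 $ 4)*(A $ 2 $ 0)*(A $ 4 $ 2) - 6*(A $ 0 $ 4)*(A $ 2 $ 1)*(A $ 3 $ 2) - 6*(A $ 0 $ 5)*(A $ 1 $ 0)*(A $ 4 $ 2) - 6*(A $ 0 $ 5)*(A $ 1 $ 2)*(A $ 3 $ 1) - 6*(A $ 0 $ 5)*(A $ 2 $ 2)*(A $ 3 $ 2) + 6*(A $ 1 $ 1)*(A $ 1 $ 2)*(A $ 2 $ 1) - 6*(A $ 1 $ 1)*(A $ 1 $ 5)*(A $ 4 $ 2) + 2*(A $ 1 $ 1)*(A $ 1 $ 1)*(A $ 1 $ 1) + 6*(A $ 1 $ 2)*(A $ 2 $ 1)*(A $ 2 $ 2) - 6*(A $ 1 $ 5)*(A $ 2 $ 2)*(A $ 4 $ 2) + 2*(A $ 2 $ 2)*(A $ 2 $ 2)*(A $ 2 $ 2)"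
  by (simp add: trace_def sum_6 J_entries sh_simps[OF assms] mat_def matrix_matrix_mult_def matrix_vector_mult_def; simp add: algebra_simps)

lemma AJ_0_0: assumes "skew_hamiltonian A" shows "(A ** Jmat) $ 0 $ 0 = 0"
  by (simp add: sum_6 J_entries sh_simps[OF assms] mat_def matrix_matrix_mult_def matrix_vector_mult_def)

lemma AJ_0_1: assumes "skew_hamiltonian A" shows "(A ** Jmat) $ 0 $ 1 = - (A $ 0 $ 4)"
  by (simp add: sum_6 J_entries sh_simps[OF assms] mat_def matrix_matrix_mult_def matrix_vector_mult_def)

lemma AJ_0_2: assumes "skew_hamiltonian A" shows "(A ** Jmat) $ 0 $ 2 = - (A $ 0 $ 5)"
  by (simp add: sum_6 J_entries sh_simps[OF assms] mat_def matrix_matrix_mult_def matrix_vector_mult_def)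

lemma AJ_0_3: assumes "skew_hamiltonian A" shows "(A ** Jmat) $ 0 $ 3 = (A $ 0 $ 0)"
  by (simp add: sum_6 J_entries sh_simps[OF assms] mat_def matrix_matrix_mult_def matrix_vector_mult_def)

lemma AJ_0_4: assumes "skew_hamiltonian A" shows "(A ** Jmat) $ 0 $ 4 = (A $ 0 $ 1)"
  by (simp add: sum_6 J_entries sh_simps[OF assms] mat_def matrix_matrix_mult_def matrix_vector_mult_def)

lemma AJ_0_5: assumes "skew_hamiltonian A" shows "(A ** Jmat) $ 0 $ 5 = (A $ 0 $ 2)"
  by (simp add: sum_6 J_entries sh_simps[OF assms] mat_def matrix_matrix_mult_def matrix_vector_mult_def)

lemma AJ_1_0: assumes "skew_hamiltonian A" shows "(A ** Jmat) $ 1 $ 0 = (A $ 0 $ 4)"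
  by (simp add: sum_6 J_entries sh_simps[OF assms] mat_def matrix_matrix_mult_def matrix_vector_mult_def)

lemma AJ_1_1: assumes "skew_hamiltonian A" shows "(A ** Jmat) $ 1 $ 1 = 0"
  by (simp add: sum_6 J_entries sh_simps[OF assms] mat_def matrix_matrix_mult_def matrix_vector_mult_def)

lemma AJ_1_2: assumes "skew_hamiltonian A" shows "(A ** Jmat) $ 1 $ 2 = - (A $ 1 $ 5)"
  by (simp add: sum_6 J_entries sh_simps[OF assms] mat_def matrix_matrix_mult_def matrix_vector_mult_def)

lemma AJ_1_3: assumes "skew_hamiltonian A" shows "(A ** Jmat) $ 1 $ 3 = (A $ 1 $ 0)"
  by (simp add: sum_6 J_entries sh_simps[OF assms] mat_def matrix_matrix_mult_def matrix_vector_mult_def)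

lemma AJ_1_4: assumes "skew_hamiltonian A" shows "(A ** Jmat) $ 1 $ 4 = (A $ 1 $ 1)"
  by (simp add: sum_6 J_entries sh_simps[OF assms] mat_def matrix_matrix_mult_def matrix_vector_mult_def)

lemma AJ_1_5: assumes "skew_hamiltonian A" shows "(A ** Jmat) $ 1 $ 5 = (A $ 1 $ 2)"
  by (simp add: sum_6 J_entries sh_simps[OF assms] mat_def matrix_matrix_mult_def matrix_vector_mult_def)

lemma AJ_2_0: assumes "skew_hamiltonian A" shows "(A ** Jmat) $ 2 $ 0 = (A $ 0 $ 5)"
  by (simp add: sum_6 J_entries sh_simps[OF assms] mat_def matrix_matrix_mult_def matrix_vector_mult_def)

lemma AJ_2_1: assumes "skew_hamiltonian A" shows "(A ** Jmat) $ 2 $ 1 = (A $ 1 $ 5)"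
  by (simp add: sum_6 J_entries sh_simps[OF assms] mat_def matrix_matrix_mult_def matrix_vector_mult_def)

lemma AJ_2_2: assumes "skew_hamiltonian A" shows "(A ** Jmat) $ 2 $ 2 = 0"
  by (simp add: sum_6 J_entries sh_simps[OF assms] mat_def matrix_matrix_mult_def matrix_vector_mult_def)

lemma AJ_2_3: assumes "skew_hamiltonian A" shows "(A ** Jmat) $ 2 $ 3 = (A $ 2 $ 0)"
  by (simp add: sum_6 J_entries sh_simps[OF assms] mat_def matrix_matrix_mult_def matrix_vector_mult_def)

lemma AJ_2_4: assumes "skew_hamiltonian A" shows "(A ** Jmat) $ 2 $ 4 = (A $ 2 $ 1)"
  by (simp add: sum_6 J_entries sh_simps[OF assms] mat_def matrix_matrix_mult_def matrix_vector_mult_def)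

lemma AJ_2_5: assumes "skew_hamiltonian A" shows "(A ** Jmat) $ 2 $ 5 = (A $ 2 $ 2)"
  by (simp add: sum_6 J_entries sh_simps[OF assms] mat_def matrix_matrix_mult_def matrix_vector_mult_def)

lemma AJ_3_0: assumes "skew_hamiltonian A" shows "(A ** Jmat) $ 3 $ 0 = - (A $ 0 $ 0)"
  by (simp add: sum_6 J_entries sh_simps[OF assms] mat_def matrix_matrix_mult_def matrix_vector_mult_def)

lemma AJ_3_1: assumes "skew_hamiltonian A" shows "(A ** Jmat) $ 3 $ 1 = - (A $ 1 $ 0)"
  by (simp add: sum_6 J_entries sh_simps[OF assms] mat_def matrix_matrix_mult_def matrix_vector_mult_def)

lemma AJ_3_2: assumes "skew_hamiltonian A" shows "(A ** Jmat) $ 3 $ 2 = - (A $ 2 $ 0)"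
  by (simp add: sum_6 J_entries sh_simps[OF assms] mat_def matrix_matrix_mult_def matrix_vector_mult_def)

lemma AJ_3_3: assumes "skew_hamiltonian A" shows "(A ** Jmat) $ 3 $ 3 = 0"
  by (simp add: sum_6 J_entries sh_simps[OF assms] mat_def matrix_matrix_mult_def matrix_vector_mult_def)

lemma AJ_3_4: assumes "skew_hamiltonian A" shows "(A ** Jmat) $ 3 $ 4 = (A $ 3 $ 1)"
  by (simp add: sum_6 J_entries sh_simps[OF assms] mat_def matrix_matrix_mult_def matrix_vector_mult_def)

lemma AJ_3_5: assumes "skew_hamiltonian A" shows "(A ** Jmat) $ 3 $ 5 = (A $ 3 $ 2)"
  by (simp add: sum_6 J_entries sh_simps[OF assms] mat_def matrix_matrix_mult_def matrix_vector_mult_def)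

lemma AJ_4_0: assumes "skew_hamiltonian A" shows "(A ** Jmat) $ 4 $ 0 = - (A $ 0 $ 1)"
  by (simp add: sum_6 J_entries sh_simps[OF assms] mat_def matrix_matrix_mult_def matrix_vector_mult_def)

lemma AJ_4_1: assumes "skew_hamiltonian A" shows "(A ** Jmat) $ 4 $ 1 = - (A $ 1 $ 1)"
  by (simp add: sum_6 J_entries sh_simps[OF assms] mat_def matrix_matrix_mult_def matrix_vector_mult_def)

lemma AJ_4_2: assumes "skew_hamiltonian A" shows "(A ** Jmat) $ 4 $ 2 = - (A $ 2 $ 1)"
  by (simp add: sum_6 J_entries sh_simps[OF assms] mat_def matrix_matrix_mult_def matrix_vector_mult_def)

lemma AJ_4_3: assumes "skew_hamiltonian A" shows "(A ** Jmat) $ 4 $ 3 = - (A $ 3 $ 1)"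
  by (simp add: sum_6 J_entries sh_simps[OF assms] mat_def matrix_matrix_mult_def matrix_vector_mult_def)

lemma AJ_4_4: assumes "skew_hamiltonian A" shows "(A ** Jmat) $ 4 $ 4 = 0"
  by (simp add: sum_6 J_entries sh_simps[OF assms] mat_def matrix_matrix_mult_def matrix_vector_mult_def)

lemma AJ_4_5: assumes "skew_hamiltonian A" shows "(A ** Jmat) $ 4 $ 5 = (A $ 4 $ 2)"
  by (simp add: sum_6 J_entries sh_simps[OF assms] mat_def matrix_matrix_mult_def matrix_vector_mult_def)

lemma AJ_5_0: assumes "skew_hamiltonian A" shows "(A ** Jmat) $ 5 $ 0 = - (A $ 0 $ 2)"
  by (simp add: sum_6 J_entries sh_simps[OF assms] mat_def matrix_matrix_mult_def matrix_vector_mult_def)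

lemma AJ_5_1: assumes "skew_hamiltonian A" shows "(A ** Jmat) $ 5 $ 1 = - (A $ 1 $ 2)"
  by (simp add: sum_6 J_entries sh_simps[OF assms] mat_def matrix_matrix_mult_def matrix_vector_mult_def)

lemma AJ_5_2: assumes "skew_hamiltonian A" shows "(A ** Jmat) $ 5 $ 2 = - (A $ 2 $ 2)"
  by (simp add: sum_6 J_entries sh_simps[OF assms] mat_def matrix_matrix_mult_def matrix_vector_mult_def)

lemma AJ_5_3: assumes "skew_hamiltonian A" shows "(A ** Jmat) $ 5 $ 3 = - (A $ 3 $ 2)"
  by (simp add: sum_6 J_entries sh_simps[OF assms] mat_def matrix_matrix_mult_def matrix_vector_mult_def)

lemma AJ_5_4: assumes "skew_hamiltonian A" shows "(A ** Jmat) $ 5 $ 4 = - (A $ 4 $ 2)"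
  by (simp add: sum_6 J_entries sh_simps[OF assms] mat_def matrix_matrix_mult_def matrix_vector_mult_def)

lemma AJ_5_5: assumes "skew_hamiltonian A" shows "(A ** Jmat) $ 5 $ 5 = 0"
  by (simp add: sum_6 J_entries sh_simps[OF assms] mat_def matrix_matrix_mult_def matrix_vector_mult_def)

lemmas AJ_simps = AJ_0_0 AJ_0_1 AJ_0_2 AJ_0_3 AJ_0_4 AJ_0_5 AJ_1_0 AJ_1_1 AJ_1_2 AJ_1_3 AJ_1_4 AJ_1_5 AJ_2_0 AJ_2_1 AJ_2_2 AJ_2_3 AJ_2_4 AJ_2_5 AJ_3_0 AJ_3_1 AJ_3_2 AJ_3_3 AJ_3_4 AJ_3_5 AJ_4_0 AJ_4_1 AJ_4_2 AJ_4_3 AJ_4_4 AJ_4_5 AJ_5_0 AJ_5_1 AJ_5_2 AJ_5_3 AJ_5_4 AJ_5_5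


lemma CH_mat: assumes "skew_hamiltonian A"
  shows "A ** A ** A = ca A *\<^sub>R (A ** A) - cb A *\<^sub>R A + cc A *\<^sub>R mat 1"
  unfolding vec_eq_iff forall_6 ca_def cb_def cc_def
  unfolding L_trAAA[OF assms] L_trAA[OF assms] L_tr[OF assms]
  by (intro conjI; simp add: sum_6 sh_simps[OF assms] mat_def matrix_matrix_mult_def; simp add: field_simps power2_eq_square power3_eq_cube)

lemma E0_all: assumes "skew_hamiltonian A"
  shows "\<forall>i. tri A u v 0 i 0 3 + tri A u v 0 i 1 4 + tri A u v 0 i 2 5 = (Jmat *v (2 *\<^sub>R u + (trace A / 2) *\<^sub>R v - A *v v)) $ i"
  unfolding forall_6 tri_def L_tr[OF assms]
  unfolding V0_simps B_simps[OF assms] D_simps[OF assms] J_entries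
  by (intro conjI; simp add: sum_6 sh_simps[OF assms] matrix_vector_mult_def; simp add: algebra_simps)

lemma E1_all: assumes "skew_hamiltonian A"
  shows "\<forall>i. (\<Sum>j\<in>UNIV. \<Sum>k\<in>UNIV. tri A u v 0 i j k * (A ** Jmat) $ j $ k) = (Jmat *v (trace A *\<^sub>R u - 2 *\<^sub>R (A *v u) + trace (A ** A) *\<^sub>R v - 2 *\<^sub>R (A *v (A *v v)))) $ i"
  unfolding forall_6 sum_6
  unfolding tri_def L_trAA[OF assms] L_tr[OF assms]
  unfolding V0_simps B_simps[OF assms] D_simps[OF assms] AJ_simps[OF assms] J_entries
  by (intro conjI; simp add: sum_6 sh_simps[OF assms] matrix_vector_mult_def; simp add: algebra_simps)

lemma J_inj: "Jmat *v x = 0 \<Longrightarrow> x = 0"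
  unfolding vec_eq_iff forall_6 V0_simps by simp

lemma res_lemma:
  fixes x0 x1 x2 x3 x4 a b c :: real
  assumes "3*x2 - 2*a*x1 + (4*b-a^2)*x0 = 0" "3*x3 - 2*a*x2 + (4*b-a^2)*x1 = 0"
    "3*x4 - 2*a*x3 + (4*b - a^2)*x2 = 0" "x3 = a*x2 - b*x1 + c*x0" "x4 = a*x3 - b*x2 + c*x1"
  shows "(27*c^2 + 4*b^3 - 18*a*b*c - a^2*b^2 + 4*a^3*c) * x0 = 0"
proof -
  have h2: "3*(a*x2 - b*x1 + c*x0) - 2*a*x2 + (4*b-a^2)*x1 = 0" using assms(2,4) by simp
  have h3: "3*(a*(a*x2 - b*x1 + c*x0) - b*x2 + c*x1) - 2*a*(a*x2 - b*x1 + c*x0) + (4*b - a^2)*x2 = 0"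
    using assms(3,4,5) by simp
  have "(27*c^2 + 4*b^3 - 18*a*b*c - a^2*b^2 + 4*a^3*c) * x0 =
     (b^2 - 3*a*c) * (3*x2 - 2*a*x1 + (4*b-a^2)*x0) + (9*c - a*b) * (3*(a*x2 - b*x1 + c*x0) - 2*a*x2 + (4*b-a^2)*x1)
     + (a^2 - 3*b) * (3*(a*(a*x2 - b*x1 + c*x0) - b*x2 + c*x1) - 2*a*(a*x2 - b*x1 + c*x0) + (4*b - a^2)*x2)"
    by (simp add: algebra_simps power2_eq_square power3_eq_cube)
  then show ?thesis using assms(1) h2 h3 by simp
qed




definition Sc :: "real^6^6 \<Rightarrow> complex^6 \<Rightarrow> 6 \<Rightarrow> complex" where
  "Sc X y i = (\<Sum>j\<in>UNIV. complex_of_real (X$i$j) * y$j)"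

lemma Sc_mult: assumes "\<forall>k. Sc B y k = \<mu> * y$k" shows "Sc (X ** B) y i = \<mu> * Sc X y i"
proof -
  have "Sc (X ** B) y i = (\<Sum>j\<in>UNIV. \<Sum>k\<in>UNIV. of_real (X$i$k) * (of_real (B$k$j) * y$j))"
    by (simp add: Sc_def matrix_matrix_mult_def of_real_sum sum_distrib_right mult.assoc)
  also have "\<dots> = (\<Sum>k\<in>UNIV. of_real (X$i$k) * (\<Sum>j\<in>UNIV. of_real (B$k$j) * y$j))"
    by (subst sum.swap) (simp add: sum_distrib_left)
  also have "\<dots> = (\<Sum>k\<in>UNIV. of_real (X$i$k) * (\<mu> * y$k))"
    using assms by (simp add: Sc_def)
  also have "\<dots> = \<mu> * Sc X y i"
    by (simp add: Sc_def sum_distrib_left mult.left_commute)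
  finally show ?thesis .
qed

lemma Sc_diff: "Sc (X - Y) y i = Sc X y i - Sc Y y i"
  by (simp add: Sc_def sum_subtractf left_diff_distrib)
lemma Sc_add: "Sc (X + Y) y i = Sc X y i + Sc Y y i"
  by (simp add: Sc_def sum.distrib distrib_right)
lemma Sc_scale: "Sc (k *\<^sub>R X) y i = of_real k * Sc X y i"
  by (simp add: Sc_def sum_distrib_left mult.assoc)
lemma Sc_one: "Sc (mat 1) y i = y$i"
proof -
  have "Sc (mat 1) y i = (\<Sum>j\<in>UNIV. if i = j then y$j else 0)"
    unfolding Sc_def by (rule sum.cong) (auto simp: mat_def)
  then show ?thesis by simp
qed
lemma Sc_zero: "Sc 0 y i = 0"
  by (simp add: Sc_def)

lemma eig: assumes "charpoly_eval A l = 0" shows "\<exists>y. y \<noteq> 0 \<and> (\<forall>i. Sc A y i = l * y$i)"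
proof -
  let ?M = "(\<chi> i j. (if i = j then l else 0) - complex_of_real (A $ i $ j)) :: complex^6^6"
  have "det ?M = 0" using assms by (simp add: charpoly_eval_def)
  hence "\<not> invertible ?M" by (simp add: invertible_det_nz)
  hence "\<not> (\<exists>B. B ** ?M = mat 1)" by (simp add: invertible_left_inverse)
  then obtain y where y: "?M *v y = 0" "y \<noteq> 0" using matrix_left_invertible_ker by blast
  have "\<forall>i. Sc A y i = l * y$i"
  proof
    fix i
    have "(?M *v y)$i = (\<Sum>j\<in>UNIV. (if i = j then l * y$j else 0) - complex_of_real (A$i$j) * y$j)"
      unfolding matrix_vector_mult_def by (simp, rule sum.cong) (auto simp: left_diff_distrib)
    also have "\<dots> = l * y$i - Sc A y i"
      by (simp add: Sc_def sum_subtractf)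
    finally have "(?M *v y)$i = l * y$i - Sc A y i" .
    then show "Sc A y i = l * y$i" using y(1) by simp
  qed
  then show ?thesis using y(2) by blast
qed

lemma root: assumes sh: "skew_hamiltonian A" and "charpoly_eval A l = 0"
  shows "l^3 - of_real (ca A) * l^2 + of_real (cb A) * l - of_real (cc A) = 0"
proof -
  obtain y where y: "y \<noteq> 0" "\<forall>i. Sc A y i = l * y$i" using eig[OF assms(2)] by blast
  have y2: "\<forall>i. Sc (A ** A) y i = l^2 * y$i"
    using Sc_mult[OF y(2), of A] y(2) by (simp add: power2_eq_square)
  have y3: "\<forall>i. Sc (A ** A ** A) y i = l^3 * y$i"
    using Sc_mult[OF y(2), of "A ** A"] y2 by (simp add: power3_eq_cube power2_eq_square)
  have CH: "A ** A ** A - ca A *\<^sub>R (A ** A) + cb A *\<^sub>R A - cc A *\<^sub>R mat 1 = 0"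
    using CH_mat[OF sh] by simp
  obtain i where i: "y$i \<noteq> 0" using y(1) by (metis vec_eq_iff zero_index)
  have "Sc (A ** A ** A - ca A *\<^sub>R (A ** A) + cb A *\<^sub>R A - cc A *\<^sub>R mat 1) y i = 0"
    unfolding CH by (rule Sc_zero)
  hence "(l^3 - of_real (ca A) * l^2 + of_real (cb A) * l - of_real (cc A)) * y$i = 0"
    using y3 y2 y(2) by (simp add: Sc_diff Sc_add Sc_scale Sc_one algebra_simps)
  then show ?thesis using i by simp
qed

lemma disc_nz: assumes sh: "skew_hamiltonian A" and g: "generic_sh A" shows "Dv A \<noteq> 0"
proof -
  obtain l1 l2 l3 where d: "l1 \<noteq> l2" "l1 \<noteq> l3" "l2 \<noteq> l3"
    and cp: "\<forall>t. charpoly_eval A t = ((t - l1) * (t - l2) * (t - l3))^2"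
    using g unfolding generic_sh_def by blast
  define \<alpha> where "\<alpha> = complex_of_real (ca A)"
  define \<beta> where "\<beta> = complex_of_real (cb A)"
  define \<gamma> where "\<gamma> = complex_of_real (cc A)"
  have r1: "l1^3 - \<alpha> * l1^2 + \<beta> * l1 - \<gamma> = 0" unfolding \<alpha>_def \<beta>_def \<gamma>_def
    by (rule root[OF sh]) (simp add: cp)
  have r2: "l2^3 - \<alpha> * l2^2 + \<beta> * l2 - \<gamma> = 0" unfolding \<alpha>_def \<beta>_def \<gamma>_def
    by (rule root[OF sh]) (simp add: cp)
  have r3: "l3^3 - \<alpha> * l3^2 + \<beta> * l3 - \<gamma> = 0" unfolding \<alpha>_def \<beta>_def \<gamma>_def
    by (rule root[OF sh]) (simp add: cp)
  have "(l1 - l2) * (l1^2 + l1*l2 + l2^2 - \<alpha>*(l1+l2) + \<beta>) =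
      (l1^3 - \<alpha> * l1^2 + \<beta> * l1 - \<gamma>) - (l2^3 - \<alpha> * l2^2 + \<beta> * l2 - \<gamma>)"
    by (simp add: algebra_simps power2_eq_square power3_eq_cube)
  hence "(l1 - l2) * (l1^2 + l1*l2 + l2^2 - \<alpha>*(l1+l2) + \<beta>) = 0" using r1 r2 by simp
  hence g12: "l1^2 + l1*l2 + l2^2 - \<alpha>*(l1+l2) + \<beta> = 0" using d by simp
  have "(l1 - l3) * (l1^2 + l1*l3 + l3^2 - \<alpha>*(l1+l3) + \<beta>) =
      (l1^3 - \<alpha> * l1^2 + \<beta> * l1 - \<gamma>) - (l3^3 - \<alpha> * l3^2 + \<beta> * l3 - \<gamma>)"
    by (simp add: algebra_simps power2_eq_square power3_eq_cube)
  hence "(l1 - l3) * (l1^2 + l1*l3 + l3^2 - \<alpha>*(l1+l3) + \<beta>) = 0" using r1 r3 by simp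
  hence g13: "l1^2 + l1*l3 + l3^2 - \<alpha>*(l1+l3) + \<beta> = 0" using d by simp
  have "(l2 - l3) * (l1 + l2 + l3 - \<alpha>) = (l1^2 + l1*l2 + l2^2 - \<alpha>*(l1+l2) + \<beta>) - (l1^2 + l1*l3 + l3^2 - \<alpha>*(l1+l3) + \<beta>)"
    by (simp add: algebra_simps power2_eq_square)
  hence "(l2 - l3) * (l1 + l2 + l3 - \<alpha>) = 0" using g12 g13 by simp
  hence ea: "\<alpha> = l1 + l2 + l3" using d by simp
  have eb: "\<beta> = l1*l2 + l1*l3 + l2*l3" using g12 unfolding ea by (simp add: algebra_simps power2_eq_square)
  have ec: "\<gamma> = l1*l2*l3" using r1 unfolding ea eb by (simp add: algebra_simps power2_eq_square power3_eq_cube)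
  have "complex_of_real (Dv A) = 27*\<gamma>^2 + 4*\<beta>^3 - 18*\<alpha>*\<beta>*\<gamma> - \<alpha>^2*\<beta>^2 + 4*\<alpha>^3*\<gamma>"
    unfolding Dv_def \<alpha>_def \<beta>_def \<gamma>_def by simp
  also have "\<dots> = - (((l1 - l2) * (l1 - l3) * (l2 - l3))^2)"
    unfolding ea eb ec by (simp add: algebra_simps power2_eq_square power3_eq_cube)
  finally have "complex_of_real (Dv A) = - (((l1 - l2) * (l1 - l3) * (l2 - l3))^2)" .
  moreover have "((l1 - l2) * (l1 - l3) * (l2 - l3))^2 \<noteq> 0" using d by simp
  ultimately show ?thesis by (metis neg_equal_0_iff_equal of_real_0)
qed




lemma H_vec: assumes sh: "skew_hamiltonian A"
  shows "A *v (A *v (A *v z)) = ca A *\<^sub>R (A *v (A *v z)) - cb A *\<^sub>R (A *v z) + cc A *\<^sub>R z"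
proof -
  have "A *v (A *v (A *v z)) = (A ** A ** A) *v z" by (simp add: matrix_vector_mul_assoc matrix_mul_assoc)
  also have "\<dots> = (ca A *\<^sub>R (A ** A) - cb A *\<^sub>R A + cc A *\<^sub>R mat 1) *v z" using CH_mat[OF sh] by simp
  also have "\<dots> = ca A *\<^sub>R (A *v (A *v z)) - cb A *\<^sub>R (A *v z) + cc A *\<^sub>R z"
    by (simp add: matrix_vector_mult_add_rdistrib matrix_vector_mult_diff_rdistrib
        scaleR_matrix_vector_assoc[symmetric] matrix_vector_mul_assoc)
  finally show ?thesis .
qed

lemma res2:
  fixes za zb zc zd ze a b c :: real
  assumes "3*zc - 2*a*zb + (4*b-a^2)*za = 0" "3*zd - 2*a*zc + (4*b-a^2)*zb = 0"
    "3*ze - 2*a*zd + (4*b - a^2)*zc = 0" "zd = a*zc - b*zb + c*za" "ze = a*zd - b*zc + c*zb"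
  shows "(27*c^2 + 4*b^3 - 18*a*b*c - a^2*b^2 + 4*a^3*c) * za = 0"
  using res_lemma[OF assms] .

lemma lemK: assumes sh: "skew_hamiltonian A" and D: "Dv A \<noteq> 0"
  and T: "\<forall>i j k. tri A u v 0 i j k = 0"
  shows "u = 0 \<and> v = 0"
proof -
  have X0: "2 *\<^sub>R u + (trace A / 2) *\<^sub>R v - A *v v = 0"
    apply (rule J_inj)
    using E0_all[OF sh, of u v] T by (simp add: vec_eq_iff)
  have X1: "trace A *\<^sub>R u - 2 *\<^sub>R (A *v u) + trace (A ** A) *\<^sub>R v - 2 *\<^sub>R (A *v (A *v v)) = 0"
    apply (rule J_inj)
    using E1_all[OF sh, of u v] T by (simp add: vec_eq_iff)
  have AX0: "2 *\<^sub>R (A *v u) + (trace A / 2) *\<^sub>R (A *v v) - A *v (A *v v) = 0"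
  proof -
    have "A *v (2 *\<^sub>R u + (trace A / 2) *\<^sub>R v - A *v v) = 0" using X0 by simp
    then show ?thesis by (simp add: algebra_simps)
  qed
  define N where "N z = 3 *\<^sub>R (A *v (A *v z)) - (2 * ca A) *\<^sub>R (A *v z) + (4 * cb A - (ca A)^2) *\<^sub>R z" for z
  have NA: "N (A *v z) = A *v N z" for z by (simp add: N_def algebra_simps)
  have Nv: "N v = 0"
  proof -
    have "N v = (trace A / 2) *\<^sub>R (2 *\<^sub>R u + (trace A / 2) *\<^sub>R v - A *v v)
       - (trace A *\<^sub>R u - 2 *\<^sub>R (A *v u) + trace (A ** A) *\<^sub>R v - 2 *\<^sub>R (A *v (A *v v)))
       - (2 *\<^sub>R (A *v u) + (trace A / 2) *\<^sub>R (A *v v) - A *v (A *v v))"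
      unfolding N_def ca_def cb_def vec_eq_iff
      by (simp add: field_simps power2_eq_square)
    then show ?thesis using X0 X1 AX0 by simp
  qed
  have N1: "N (A *v v) = 0" using Nv NA by simp
  have N2: "N (A *v (A *v v)) = 0" using N1 NA by simp
  have "\<forall>i. v $ i = 0"
  proof
    fix i
    have "Dv A * v$i = 0"
      unfolding Dv_def
    proof (rule res2[where zb = "(A *v v)$i" and zc = "(A *v (A *v v))$i"
          and zd = "(A *v (A *v (A *v v)))$i" and ze = "(A *v (A *v (A *v (A *v v))))$i"])
      show "3 * (A *v (A *v v)) $ i - 2 * ca A * (A *v v) $ i + (4 * cb A - (ca A)\<^sup>2) * v $ i = 0"
        using Nv unfolding N_def vec_eq_iff by simp
      show "3 * (A *v (A *v (A *v v))) $ i - 2 * ca A * (A *v (A *v v)) $ i + (4 * cb A - (ca A)\<^sup>2) * (A *v v) $ i = 0"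
        using N1 unfolding N_def vec_eq_iff by simp
      show "3 * (A *v (A *v (A *v (A *v v)))) $ i - 2 * ca A * (A *v (A *v (A *v v))) $ i + (4 * cb A - (ca A)\<^sup>2) * (A *v (A *v v)) $ i = 0"
        using N2 unfolding N_def vec_eq_iff by simp
      show "(A *v (A *v (A *v v))) $ i = ca A * (A *v (A *v v)) $ i - cb A * (A *v v) $ i + cc A * v $ i"
        using H_vec[OF sh, of v] unfolding vec_eq_iff by simp
      show "(A *v (A *v (A *v (A *v v)))) $ i = ca A * (A *v (A *v (A *v v))) $ i - cb A * (A *v (A *v v)) $ i + cc A * (A *v v) $ i"
        using H_vec[OF sh, of "A *v v"] unfolding vec_eq_iff by simp
    qed
    then show "v $ i = 0" using D by simp
  qed
  hence v0: "v = 0" by (simp add: vec_eq_iff)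
  hence "2 *\<^sub>R u = 0" using X0 by simp
  hence "u = 0" by simp
  then show ?thesis using v0 by simp
qed




lemma pd_entry:
  fixes f g h :: "real^6 \<Rightarrow> real"
  assumes "f differentiable (at x)" "g differentiable (at x)" "h differentiable (at x)"
  shows "frechet_derivative (\<lambda>y. (1 - e * f y) * c1 - (e * g y) * c2 - (e * h y) * c3) (at x) d =
    - (e * frechet_derivative f (at x) d * c1) - e * frechet_derivative g (at x) d * c2 - e * frechet_derivative h (at x) d * c3"
proof -
  have df: "(f has_derivative frechet_derivative f (at x)) (at x)" using assms(1) frechet_derivative_works by blast
  have dg: "(g has_derivative frechet_derivative g (at x)) (at x)" using assms(2) frechet_derivative_works by blast
  have dh: "(h has_derivative frechet_derivative h (at x)) (at x)" using assms(3) frechet_derivative_works by blast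
  have "((\<lambda>y. (1 - e * f y) * c1 - (e * g y) * c2 - (e * h y) * c3) has_derivative
     (\<lambda>d. - (e * frechet_derivative f (at x) d * c1) - e * frechet_derivative g (at x) d * c2 - e * frechet_derivative h (at x) d * c3)) (at x)"
    by (rule derivative_eq_intros df dg dh | simp)+
  from fun_cong[OF frechet_derivative_at[OF this], of d] show ?thesis by simp
qed

lemma smooth_diff: "smooth f \<Longrightarrow> f differentiable (at x)"
  unfolding smooth_def by (drule spec[of _ "[]"]) (simp add: differentiable_on_def)

definition triv :: "real^6^6 \<Rightarrow> real^6 \<Rightarrow> real^6 \<Rightarrow> real^6 \<Rightarrow> 6 \<Rightarrow> 6 \<Rightarrow> 6 \<Rightarrow> real" where
  "triv A U V W i j k =
    U$i * Jmat$j$k + V$i * (Jmat ** A)$j$k + W$i * (Jmat ** A ** A)$j$k +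
    U$j * Jmat$k$i + V$j * (Jmat ** A)$k$i + W$j * (Jmat ** A ** A)$k$i +
    U$k * Jmat$i$j + V$k * (Jmat ** A)$i$j + W$k * (Jmat ** A ** A)$i$j"

lemma tri_triv: "tri A u v w i j k = triv A (Jmat *v u) (Jmat *v v) (Jmat *v w) i j k"
  by (simp add: tri_def triv_def)

lemma triv_lin: "triv A (U - e *\<^sub>R U') (V - e *\<^sub>R V') (W - e *\<^sub>R W') i j k = triv A U V W i j k - e * triv A U' V' W' i j k"
  by (simp add: triv_def algebra_simps)

lemma tri_sub: "tri A (u - u') (v - v') 0 i j k = tri A u v w i j k - tri A u' v' w i j k"
  by (simp add: tri_def algebra_simps)

lemma shB: "skew_hamiltonian A \<Longrightarrow> transpose A ** Jmat = Jmat ** A"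
  by (simp add: skew_hamiltonian_def)

lemma shD: assumes "skew_hamiltonian A" shows "transpose A ** transpose A ** Jmat = Jmat ** A ** A"
proof -
  have "transpose A ** transpose A ** Jmat = transpose A ** (transpose A ** Jmat)" by (simp add: matrix_mul_assoc)
  also have "\<dots> = (transpose A ** Jmat) ** A" using shB[OF assms] by (simp add: matrix_mul_assoc)
  also have "\<dots> = Jmat ** A ** A" using shB[OF assms] by simp
  finally show ?thesis .
qed

lemma Pi_sh: assumes "skew_hamiltonian A"
  shows "Pi_eps A p q r e x = (1 - e^2 * p x) *\<^sub>R Jmat - (e^2 * q x) *\<^sub>R (Jmat ** A) - (e^2 * r x) *\<^sub>R (Jmat ** A ** A)"
  unfolding Pi_eps_def shB[OF assms] shD[OF assms] ..

definition Qv :: "real^6^6 \<Rightarrow> (real^6 \<Rightarrow> real) \<Rightarrow> (real^6 \<Rightarrow> real) \<Rightarrow> (real^6 \<Rightarrow> real) \<Rightarrow> real^6 \<Rightarrow> real^6 \<Rightarrow> real^6" where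
  "Qv A p q r x g = p x *\<^sub>R g + q x *\<^sub>R (A *v g) + r x *\<^sub>R (A *v (A *v g))"

lemma Pi_mv: assumes "skew_hamiltonian A"
  shows "Pi_eps A p q r e x *v g = Jmat *v g - e^2 *\<^sub>R (Jmat *v Qv A p q r x g)"
  unfolding Pi_sh[OF assms] Qv_def
  by (simp add: algebra_simps scaleR_matrix_vector_assoc[symmetric] matrix_vector_mul_assoc[symmetric])

lemma jac: assumes sh: "skew_hamiltonian A" and dp: "smooth p" and dq: "smooth q" and dr: "smooth r"
  shows "coord_bracket (Pi_eps A p q r e) i j k x + coord_bracket (Pi_eps A p q r e) j k i x + coord_bracket (Pi_eps A p q r e) k i j x =
    - (e^2) * (tri A (grad p x) (grad q x) (grad r x) i j k
       - e^2 * tri A (Qv A p q r x (grad p x)) (Qv A p q r x (grad q x)) (Qv A p q r x (grad r x)) i j k)"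
proof -
  have pde: "pdiff (\<lambda>y. Pi_eps A p q r e y $ a $ b) l x =
     - (e^2 * grad p x $ l * Jmat$a$b) - e^2 * grad q x $ l * (Jmat ** A)$a$b - e^2 * grad r x $ l * (Jmat ** A ** A)$a$b" for a b l
  proof -
    have "(\<lambda>y. Pi_eps A p q r e y $ a $ b) = (\<lambda>y. (1 - e^2 * p y) * Jmat$a$b - (e^2 * q y) * (Jmat ** A)$a$b - (e^2 * r y) * (Jmat ** A ** A)$a$b)"
      by (simp add: Pi_sh[OF sh])
    then show ?thesis unfolding pdiff_def grad_def
      using pd_entry[OF smooth_diff[OF dp] smooth_diff[OF dq] smooth_diff[OF dr]] by (simp add: pdiff_def)
  qed
  have cb: "coord_bracket (Pi_eps A p q r e) a b c x =
     - (e^2) * ((Pi_eps A p q r e x *v grad p x)$a * Jmat$b$c + (Pi_eps A p q r e x *v grad q x)$a * (Jmat ** A)$b$c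
        + (Pi_eps A p q r e x *v grad r x)$a * (Jmat ** A ** A)$b$c)" for a b c
    unfolding coord_bracket_def pde
    by (simp add: matrix_vector_mult_def sum_6 algebra_simps)
  show ?thesis
    unfolding cb Pi_mv[OF sh] tri_triv
    using triv_lin[of A "Jmat *v grad p x" "e^2" "Jmat *v Qv A p q r x (grad p x)" "Jmat *v grad q x"
        "Jmat *v Qv A p q r x (grad q x)" "Jmat *v grad r x" "Jmat *v Qv A p q r x (grad r x)" i j k]
    by (simp add: triv_def algebra_simps)
qed




lemma Pi_skew: assumes sh: "skew_hamiltonian A"
  shows "transpose (Pi_eps A p q r e x) = - Pi_eps A p q r e x"
  unfolding vec_eq_iff forall_6 transpose_def Pi_sh[OF sh]
  by (simp add: B_simps[OF sh] D_simps[OF sh] J_entries; simp add: algebra_simps)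

lemma comm1: "Qv A p q r x ((A - a *\<^sub>R mat 1) *v w) = (A - a *\<^sub>R mat 1) *v Qv A p q r x w"
  unfolding Qv_def
  by (simp add: algebra_simps scaleR_matrix_vector_assoc[symmetric] matrix_vector_mul_assoc[symmetric])

lemma comm2: "Qv A p q r x ((A ** A - a *\<^sub>R A + b *\<^sub>R mat 1) *v w) = (A ** A - a *\<^sub>R A + b *\<^sub>R mat 1) *v Qv A p q r x w"
  unfolding Qv_def
  by (simp add: algebra_simps scaleR_matrix_vector_assoc[symmetric] matrix_vector_mul_assoc[symmetric])

theorem mainTheorem13:
  fixes A :: "real^6^6" and p q r :: "real^6 \<Rightarrow> real"
  assumes "skew_hamiltonian A" and "generic_sh A"
    and "smooth p" and "smooth q" and "smooth r"
  shows "(\<forall>\<epsilon>. poisson_tensor (Pi_eps A p q r \<epsilon>)) \<longleftrightarrow>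
    (let a = trace A / 2;
         b = (trace A)^2 / 8 - trace (A ** A) / 4;
         C1 = A - a *\<^sub>R mat 1;
         C2 = A ** A - a *\<^sub>R A + b *\<^sub>R mat 1
     in \<forall>x. grad q x = C1 *v grad r x \<and> grad p x = C2 *v grad r x)"
proof -
  note sh = assms(1)
  define C1 where "C1 = A - (trace A / 2) *\<^sub>R mat 1"
  define C2 where "C2 = A ** A - (trace A / 2) *\<^sub>R A + ((trace A)^2 / 8 - trace (A ** A) / 4) *\<^sub>R mat 1"
  have idI: "tri A (C2 *v w) (C1 *v w) w i j k = 0" for w i j k
    using idI_all[OF sh, of w] unfolding C1_def C2_def by blast
  note jac' = jac[OF sh assms(3-5)]
  have "(\<forall>\<epsilon>. poisson_tensor (Pi_eps A p q r \<epsilon>)) \<longleftrightarrow> (\<forall>x. grad q x = C1 *v grad r x \<and> grad p x = C2 *v grad r x)"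
  proof
    assume P: "\<forall>\<epsilon>. poisson_tensor (Pi_eps A p q r \<epsilon>)"
    show "\<forall>x. grad q x = C1 *v grad r x \<and> grad p x = C2 *v grad r x"
    proof
      fix x
      let ?T0 = "\<lambda>i j k. tri A (grad p x) (grad q x) (grad r x) i j k"
      let ?T1 = "\<lambda>i j k. tri A (Qv A p q r x (grad p x)) (Qv A p q r x (grad q x)) (Qv A p q r x (grad r x)) i j k"
      have T0: "?T0 i j k = 0" for i j k
      proof -
        have "- (1^2) * (?T0 i j k - 1^2 * ?T1 i j k) = 0"
          using P[rule_format, of 1] unfolding poisson_tensor_def jac' by blast
        moreover have "- ((sqrt 2)^2) * (?T0 i j k - (sqrt 2)^2 * ?T1 i j k) = 0"
          using P[rule_format, of "sqrt 2"] unfolding poisson_tensor_def jac' by blast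
        ultimately show ?thesis by simp
      qed
      have "\<forall>i j k. tri A (grad p x - C2 *v grad r x) (grad q x - C1 *v grad r x) 0 i j k = 0"
        unfolding tri_sub[where w = "grad r x"] using T0 idI by simp
      from lemK[OF sh disc_nz[OF sh assms(2)] this]
      show "grad q x = C1 *v grad r x \<and> grad p x = C2 *v grad r x" by simp
    qed
  next
    assume G: "\<forall>x. grad q x = C1 *v grad r x \<and> grad p x = C2 *v grad r x"
    show "\<forall>\<epsilon>. poisson_tensor (Pi_eps A p q r \<epsilon>)"
    proof
      fix e
      show "poisson_tensor (Pi_eps A p q r e)"
        unfolding poisson_tensor_def
      proof (intro conjI allI)
        fix x show "transpose (Pi_eps A p q r e x) = - Pi_eps A p q r e x" by (rule Pi_skew[OF sh])
      next
        fix x i j k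
        have gq: "grad q x = C1 *v grad r x" and gp: "grad p x = C2 *v grad r x" using G by auto
        have "Qv A p q r x (grad q x) = C1 *v Qv A p q r x (grad r x)" unfolding gq C1_def by (rule comm1)
        moreover have "Qv A p q r x (grad p x) = C2 *v Qv A p q r x (grad r x)" unfolding gp C2_def by (rule comm2)
        ultimately show "coord_bracket (Pi_eps A p q r e) i j k x + coord_bracket (Pi_eps A p q r e) j k i x +
            coord_bracket (Pi_eps A p q r e) k i j x = 0"
          unfolding jac' using idI gp gq by simp
      qed
    qed
  qed
  then show ?thesis unfolding C1_def C2_def Let_def .
qed


end
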